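(* In the Markovian setting with finite horizon $T<\infty$, there exists a unique equilibrium with preference for early stopping, and this equilibrium is Markovian (i.e., $\theta_t$ is $\sigma(X_t,1_{D_t})$-measurable for every $t\le T$).
   Context: Markovian setting: $T\in\mathbb{N}$, $\mathbb{T}=\{0,\dots,T\}$; $(\Omega,\mathcal{F},P)$ with filtration $(\mathcal{F}_t)_{t\le T}$, $\mathcal{F}_0$ trivial; $X$ is a Markov chain (with respect to $(\mathcal{F}_t)$) with values in a separable metric space $\mathbb{X}$ and deterministic $X_0=x_0$; $B\subseteq\mathbb{X}$ is measurable with $x_0\in B$; $\sigma=\inf\{t\ge0: X_t\notin B\}$ and $D_t=\{t<\sigma\}$. The payoff is $G_t=\delta^t g(t,X_t)$ on $D_t$ for a deterministic measurable function $g$ and $\delta\in(0,1]$, and $G_t=\Delta$ on $D_t^c$, where $\Delta$ is an auxiliary symbol with $0\cdot\Delta=0$; assume $E[\sup_{t\le T}|G_t|1_{D_t}]<\infty$. Notation: $s\lhd t$ iff $s<t$ or $t=\infty$; $\inf\emptyset=\infty$. Effective horizon $T_e=T\wedge\inf\{0\le t<T:P(D_{t+1}\mid\mathcal{F}_t)=0\}$. A stopping policy is a $\{0,1\}$-valued adapted process $\theta=(\theta_t)_{t\in\mathbb{T}}$; $\mathcal{L}_t\theta=\inf\{s>t:\theta_s=1\}$; $\theta$ is admissible if $P(\mathcal{L}_t\theta\lhd\sigma\mid\mathcal{F}_t)>0$ on $\{t<T_e\}$ and $\theta_t=1$ on $\{t\ge T_e\}$. For admissible $\theta$, on $\{t<T_e\}$,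 $J_t(\theta)=E[G_{\mathcal{L}_t\theta}1_{\{\mathcal{L}_t\theta\lhd\sigma\}}\mid\mathcal{F}_t]/P(\mathcal{L}_t\theta\lhd\sigma\mid\mathcal{F}_t)$. $\Phi(\theta)_t$ equals $1$ on $\{t<T_e,G_t>J_t(\theta)\}$, $\theta_t$ on $\{t<T_e,G_t=J_t(\theta)\}$, $0$ on $\{t<T_e,G_t<J_t(\theta)\}$, $1$ on $\{t\ge T_e\}$. An equilibrium is an admissible $\theta$ with $\Phi(\theta)=\theta$; it has preference for early stopping if moreover $\theta_t=1$ on $\{t<T_e,G_t=J_t(\theta)\}$. *)

theory Defs
  imports "HOL-Probability.Probability"
begin

definition lhd :: "enat \<Rightarrow> enat \<Rightarrow> bool" where
  "lhd s t \<longleftrightarrow> s < t \<or> t = \<infinity>"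

definition exit_time :: "nat \<Rightarrow> (nat \<Rightarrow> 'a \<Rightarrow> 'x) \<Rightarrow> 'x set \<Rightarrow> 'a \<Rightarrow> enat" where
  "exit_time T X B \<omega> =
     (if \<exists>t\<le>T. X t \<omega> \<notin> B then enat (LEAST t. t \<le> T \<and> X t \<omega> \<notin> B) else \<infinity>)"

definition Dset :: "'a measure \<Rightarrow> nat \<Rightarrow> (nat \<Rightarrow> 'a \<Rightarrow> 'x) \<Rightarrow> 'x set \<Rightarrow> nat \<Rightarrow> 'a set" where
  "Dset M T X B t = {\<omega> \<in> space M. enat t < exit_time T X B \<omega>}"

definition Gval :: "real \<Rightarrow> (nat \<Rightarrow> 'x \<Rightarrow> real) \<Rightarrow> (nat \<Rightarrow> 'a \<Rightarrow> 'x) \<Rightarrow> nat \<Rightarrow> 'a \<Rightarrow> real" where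
  "Gval \<delta> g X t \<omega> = \<delta> ^ t * g t (X t \<omega>)"

definition cprob :: "'a measure \<Rightarrow> 'a measure \<Rightarrow> 'a set \<Rightarrow> 'a \<Rightarrow> real" where
  "cprob M N A = real_cond_exp M N (indicator (A \<inter> space M))"

definition eff_horizon ::
  "'a measure \<Rightarrow> (nat \<Rightarrow> 'a measure) \<Rightarrow> nat \<Rightarrow> (nat \<Rightarrow> 'a \<Rightarrow> 'x) \<Rightarrow> 'x set \<Rightarrow> 'a \<Rightarrow> nat" where
  "eff_horizon M F T X B \<omega> =
     (if \<exists>t<T. cprob M (F t) (Dset M T X B (Suc t)) \<omega> = 0
      then (LEAST t. t < T \<and> cprob M (F t) (Dset M T X B (Suc t)) \<omega> = 0) else T)"

definition next_stop :: "nat \<Rightarrow> (nat \<Rightarrow> 'a \<Rightarrow> bool) \<Rightarrow> nat \<Rightarrow> 'a \<Rightarrow> enat" where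
  "next_stop T \<theta> t \<omega> =
     (if \<exists>s. t < s \<and> s \<le> T \<and> \<theta> s \<omega> then enat (LEAST s. t < s \<and> s \<le> T \<and> \<theta> s \<omega>) else \<infinity>)"

text \<open>stopping policy: {0,1}-valued (here bool-valued) adapted process\<close>
definition stopping_policy :: "(nat \<Rightarrow> 'a measure) \<Rightarrow> nat \<Rightarrow> (nat \<Rightarrow> 'a \<Rightarrow> bool) \<Rightarrow> bool" where
  "stopping_policy F T \<theta> \<longleftrightarrow> (\<forall>t\<le>T. \<theta> t \<in> F t \<rightarrow>\<^sub>M count_space UNIV)"

definition stop_before_exit ::
  "'a measure \<Rightarrow> nat \<Rightarrow> (nat \<Rightarrow> 'a \<Rightarrow> 'x) \<Rightarrow> 'x set \<Rightarrow> (nat \<Rightarrow> 'a \<Rightarrow> bool) \<Rightarrow> nat \<Rightarrow> 'a set" where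
  "stop_before_exit M T X B \<theta> t =
     {\<omega> \<in> space M. lhd (next_stop T \<theta> t \<omega>) (exit_time T X B \<omega>)}"

definition admissible ::
  "'a measure \<Rightarrow> (nat \<Rightarrow> 'a measure) \<Rightarrow> nat \<Rightarrow> (nat \<Rightarrow> 'a \<Rightarrow> 'x) \<Rightarrow> 'x set \<Rightarrow> (nat \<Rightarrow> 'a \<Rightarrow> bool) \<Rightarrow> bool" where
  "admissible M F T X B \<theta> \<longleftrightarrow> stopping_policy F T \<theta> \<and>
     (\<forall>t\<le>T. AE \<omega> in M. t < eff_horizon M F T X B \<omega> \<longrightarrow>
                          cprob M (F t) (stop_before_exit M T X B \<theta> t) \<omega> > 0) \<and>
     (\<forall>t\<le>T. AE \<omega> in M. eff_horizon M F T X B \<omega> \<le> t \<longrightarrow> \<theta> t \<omega>)"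

text \<open>G_(L_t theta) 1_{L_t theta lhd sigma} (with 0 * Delta = 0)\<close>
definition stopped_payoff ::
  "nat \<Rightarrow> (nat \<Rightarrow> 'a \<Rightarrow> 'x) \<Rightarrow> 'x set \<Rightarrow> real \<Rightarrow> (nat \<Rightarrow> 'x \<Rightarrow> real) \<Rightarrow> (nat \<Rightarrow> 'a \<Rightarrow> bool) \<Rightarrow> nat \<Rightarrow> 'a \<Rightarrow> real" where
  "stopped_payoff T X B \<delta> g \<theta> t \<omega> =
     (if lhd (next_stop T \<theta> t \<omega>) (exit_time T X B \<omega>)
      then (case next_stop T \<theta> t \<omega> of enat s \<Rightarrow> Gval \<delta> g X s \<omega> | \<infinity> \<Rightarrow> 0) else 0)"

definition Jval ::
  "'a measure \<Rightarrow> (nat \<Rightarrow> 'a measure) \<Rightarrow> nat \<Rightarrow> (nat \<Rightarrow> 'a \<Rightarrow> 'x) \<Rightarrow> 'x set \<Rightarrow> real \<Rightarrow> (nat \<Rightarrow> 'x \<Rightarrow> real)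
     \<Rightarrow> (nat \<Rightarrow> 'a \<Rightarrow> bool) \<Rightarrow> nat \<Rightarrow> 'a \<Rightarrow> real" where
  "Jval M F T X B \<delta> g \<theta> t \<omega> =
     real_cond_exp M (F t) (stopped_payoff T X B \<delta> g \<theta> t) \<omega> /
     cprob M (F t) (stop_before_exit M T X B \<theta> t) \<omega>"

definition Phi ::
  "'a measure \<Rightarrow> (nat \<Rightarrow> 'a measure) \<Rightarrow> nat \<Rightarrow> (nat \<Rightarrow> 'a \<Rightarrow> 'x) \<Rightarrow> 'x set \<Rightarrow> real \<Rightarrow> (nat \<Rightarrow> 'x \<Rightarrow> real)
     \<Rightarrow> (nat \<Rightarrow> 'a \<Rightarrow> bool) \<Rightarrow> nat \<Rightarrow> 'a \<Rightarrow> bool" where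
  "Phi M F T X B \<delta> g \<theta> t \<omega> =
     (if t < eff_horizon M F T X B \<omega> then
        (if Gval \<delta> g X t \<omega> > Jval M F T X B \<delta> g \<theta> t \<omega> then True
         else if Gval \<delta> g X t \<omega> = Jval M F T X B \<delta> g \<theta> t \<omega> then \<theta> t \<omega>
         else False)
      else True)"

definition equilibrium ::
  "'a measure \<Rightarrow> (nat \<Rightarrow> 'a measure) \<Rightarrow> nat \<Rightarrow> (nat \<Rightarrow> 'a \<Rightarrow> 'x) \<Rightarrow> 'x set \<Rightarrow> real \<Rightarrow> (nat \<Rightarrow> 'x \<Rightarrow> real)
     \<Rightarrow> (nat \<Rightarrow> 'a \<Rightarrow> bool) \<Rightarrow> bool" where
  "equilibrium M F T X B \<delta> g \<theta> \<longleftrightarrow> admissible M F T X B \<theta> \<and>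
     (\<forall>t\<le>T. AE \<omega> in M. Phi M F T X B \<delta> g \<theta> t \<omega> = \<theta> t \<omega>)"

definition equilibrium_early ::
  "'a measure \<Rightarrow> (nat \<Rightarrow> 'a measure) \<Rightarrow> nat \<Rightarrow> (nat \<Rightarrow> 'a \<Rightarrow> 'x) \<Rightarrow> 'x set \<Rightarrow> real \<Rightarrow> (nat \<Rightarrow> 'x \<Rightarrow> real)
     \<Rightarrow> (nat \<Rightarrow> 'a \<Rightarrow> bool) \<Rightarrow> bool" where
  "equilibrium_early M F T X B \<delta> g \<theta> \<longleftrightarrow> equilibrium M F T X B \<delta> g \<theta> \<and>
     (\<forall>t\<le>T. AE \<omega> in M. (t < eff_horizon M F T X B \<omega> \<and>
                          Gval \<delta> g X t \<omega> = Jval M F T X B \<delta> g \<theta> t \<omega>) \<longrightarrow> \<theta> t \<omega>)"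

definition markovian_policy ::
  "'a measure \<Rightarrow> nat \<Rightarrow> (nat \<Rightarrow> 'a \<Rightarrow> 'x::topological_space) \<Rightarrow> 'x set \<Rightarrow> (nat \<Rightarrow> 'a \<Rightarrow> bool) \<Rightarrow> bool" where
  "markovian_policy M T X B \<theta> \<longleftrightarrow>
     (\<forall>t\<le>T. \<theta> t \<in> vimage_algebra (space M) (\<lambda>\<omega>. (X t \<omega>, indicator (Dset M T X B t) \<omega> :: real))
                                     (borel \<Otimes>\<^sub>M borel) \<rightarrow>\<^sub>M count_space UNIV)"

definition markov_chain ::
  "'a measure \<Rightarrow> (nat \<Rightarrow> 'a measure) \<Rightarrow> nat \<Rightarrow> (nat \<Rightarrow> 'a \<Rightarrow> 'x::topological_space) \<Rightarrow> bool" where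
  "markov_chain M F T X \<longleftrightarrow>
     (\<forall>t\<le>T. X t \<in> borel_measurable (F t)) \<and>
     (\<forall>t<T. \<forall>A\<in>sets borel. AE \<omega> in M.
        real_cond_exp M (F t) (\<lambda>\<omega>. indicator A (X (Suc t) \<omega>)) \<omega> =
        real_cond_exp M (vimage_algebra (space M) (X t) borel) (\<lambda>\<omega>. indicator A (X (Suc t) \<omega>)) \<omega>)"

end

theory Submission
  imports Defs
begin

lemma lhd_enat: "lhd (enat s) e \<longleftrightarrow> enat s < e"
  unfolding lhd_def by (cases e) auto

lemma lhd_inf: "lhd \<infinity> e \<longleftrightarrow> e = \<infinity>"
  unfolding lhd_def by (cases e) auto

lemma exit_time_gt: "t \<le> T \<Longrightarrow> enat t < exit_time T X B \<omega> \<longleftrightarrow> (\<forall>s\<le>t. X s \<omega> \<in> B)"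
proof -
  assume tT: "t \<le> T"
  show ?thesis
  proof (cases "\<exists>s\<le>T. X s \<omega> \<notin> B")
    case True
    let ?P = "\<lambda>s. s \<le> T \<and> X s \<omega> \<notin> B"
    have e: "exit_time T X B \<omega> = enat (Least ?P)" using True unfolding exit_time_def by auto
    have "t < Least ?P \<longleftrightarrow> (\<forall>s\<le>t. X s \<omega> \<in> B)"
    proof
      assume "t < Least ?P"
      then show "\<forall>s\<le>t. X s \<omega> \<in> B" using not_less_Least[of _ ?P] tT
        by (metis (no_types, lifting) le_less_trans order.trans linorder_not_le)
    next
      assume a: "\<forall>s\<le>t. X s \<omega> \<in> B"
      have "?P (Least ?P)" using True by (metis (mono_tags, lifting) LeastI)
      then show "t < Least ?P" using a by (meson not_le_imp_less)
    qed
    then show ?thesis using e by simp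
  next
    case False
    then show ?thesis unfolding exit_time_def using tT by auto
  qed
qed

lemma next_stop_T: "next_stop T \<theta> T \<omega> = \<infinity>"
  unfolding next_stop_def by auto

lemma next_stop_Suc:
  assumes "t < T"
  shows "next_stop T \<theta> t \<omega> = (if \<theta> (Suc t) \<omega> then enat (Suc t) else next_stop T \<theta> (Suc t) \<omega>)"
proof (cases "\<theta> (Suc t) \<omega>")
  case True
  have l: "(LEAST s. t < s \<and> s \<le> T \<and> \<theta> s \<omega>) = Suc t"
  proof (rule Least_equality)
    show "t < Suc t \<and> Suc t \<le> T \<and> \<theta> (Suc t) \<omega>" using True assms by simp
    show "\<And>y. t < y \<and> y \<le> T \<and> \<theta> y \<omega> \<Longrightarrow> Suc t \<le> y" by simp
  qed
  have "\<exists>s. t < s \<and> s \<le> T \<and> \<theta> s \<omega>" using True assms by (intro exI[of _ "Suc t"]) simp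
  then show ?thesis unfolding next_stop_def using True l by simp
next
  case False
  have e: "\<And>s. (t < s \<and> s \<le> T \<and> \<theta> s \<omega>) = (Suc t < s \<and> s \<le> T \<and> \<theta> s \<omega>)"
  proof -
    fix s show "(t < s \<and> s \<le> T \<and> \<theta> s \<omega>) = (Suc t < s \<and> s \<le> T \<and> \<theta> s \<omega>)"
      using False by (cases "s = Suc t") auto
  qed
  show ?thesis unfolding next_stop_def e using False by simp
qed

lemma next_stop_enat: "next_stop T \<theta> t \<omega> = enat s \<Longrightarrow> t < s \<and> s \<le> T \<and> \<theta> s \<omega>"
proof -
  assume a: "next_stop T \<theta> t \<omega> = enat s"
  then have ex: "\<exists>s. t < s \<and> s \<le> T \<and> \<theta> s \<omega>" unfolding next_stop_def by (auto split: if_splits)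
  then have "s = (LEAST s. t < s \<and> s \<le> T \<and> \<theta> s \<omega>)" using a unfolding next_stop_def by simp
  then show ?thesis using LeastI_ex[OF ex] by simp
qed

lemma next_stop_cong:
  assumes "\<And>s. t < s \<Longrightarrow> s \<le> T \<Longrightarrow> \<theta> s \<omega> = \<theta>' s \<omega>"
  shows "next_stop T \<theta> t \<omega> = next_stop T \<theta>' t \<omega>"
proof -
  have e: "\<And>s. (t < s \<and> s \<le> T \<and> \<theta> s \<omega>) = (t < s \<and> s \<le> T \<and> \<theta>' s \<omega>)" using assms by blast
  show ?thesis unfolding next_stop_def e ..
qed

locale mk =
  fixes M :: "'a measure" and F :: "nat \<Rightarrow> 'a measure" and T :: nat
    and X :: "nat \<Rightarrow> 'a \<Rightarrow> 'x::{metric_space, second_countable_topology}"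
    and x0 :: 'x and B :: "'x set" and \<delta> :: real and g :: "nat \<Rightarrow> 'x \<Rightarrow> real"
  assumes probM: "prob_space M"
    and filt_sub: "\<forall>t\<le>T. subalgebra M (F t)"
    and filt_mono: "\<forall>s t. s \<le> t \<longrightarrow> t \<le> T \<longrightarrow> sets (F s) \<subseteq> sets (F t)"
    and markov: "markov_chain M F T X"
    and X0: "\<forall>\<omega>\<in>space M. X 0 \<omega> = x0"
    and B_meas: "B \<in> sets borel" and x0B: "x0 \<in> B"
    and g_meas: "\<forall>t\<le>T. g t \<in> borel_measurable borel"
    and integr: "integrable M (\<lambda>\<omega>. Max ((\<lambda>t. \<bar>Gval \<delta> g X t \<omega>\<bar> * indicator (Dset M T X B t) \<omega>) ` {0..T}))"
begin

abbreviation "D t \<equiv> Dset M T X B t"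
abbreviation "GV t \<equiv> Gval \<delta> g X t"
abbreviation "VA t s \<equiv> vimage_algebra (space M) (\<lambda>\<omega>. (X t \<omega>, indicator (D s) \<omega> :: real)) (borel \<Otimes>\<^sub>M borel)"
abbreviation "H t \<equiv> VA t t"
abbreviation "G t \<equiv> vimage_algebra (space M) (X t) borel"
abbreviation "Gm \<equiv> (\<lambda>\<omega>. Max ((\<lambda>t. \<bar>GV t \<omega>\<bar> * indicator (D t) \<omega>) ` {0..T}))"

sublocale prob_space M by (rule probM)

lemma sfs: "subalgebra M N \<Longrightarrow> sigma_finite_subalgebra M N"
  by (rule finite_measure_subalgebra_is_sigma_finite)
     (simp add: finite_measure_subalgebra_def finite_measure_subalgebra_axioms_def finite_measure_axioms)

lemma subF: "t \<le> T \<Longrightarrow> subalgebra M (F t)"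
  using filt_sub by auto

lemma spaceF[simp]: "t \<le> T \<Longrightarrow> space (F t) = space M"
  using subF unfolding subalgebra_def by auto

lemma Fmono: "s \<le> t \<Longrightarrow> t \<le> T \<Longrightarrow> subalgebra (F t) (F s)"
  using filt_mono unfolding subalgebra_def by auto

lemma XF: "t \<le> T \<Longrightarrow> X t \<in> borel_measurable (F t)"
  using markov unfolding markov_chain_def by auto

lemma XM: "t \<le> T \<Longrightarrow> X t \<in> borel_measurable M"
  using XF subF measurable_from_subalg by blast

lemma D_sub: "D t \<subseteq> space M"
  unfolding Dset_def by auto

lemma D_char: "t \<le> T \<Longrightarrow> D t = {\<omega>\<in>space M. \<forall>s\<le>t. X s \<omega> \<in> B}"
  by (auto simp: Dset_def exit_time_gt)

lemma D_0: "D 0 = space M"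
proof -
  have "0 \<le> T" by simp
  then show ?thesis using D_char[of 0] X0 x0B by auto
qed

lemma D_Suc: "Suc t \<le> T \<Longrightarrow> D (Suc t) = D t \<inter> {\<omega>. X (Suc t) \<omega> \<in> B}"
  using D_char[of "Suc t"] D_char[of t] by (auto simp: le_Suc_eq)

lemma ind_D_Suc: "Suc t \<le> T \<Longrightarrow> indicator (D (Suc t)) \<omega> = indicator (D t) \<omega> * (indicator B (X (Suc t) \<omega>) :: real)"
  using D_Suc by (auto simp: indicator_def)

lemma D_anti: "s \<le> t \<Longrightarrow> t \<le> T \<Longrightarrow> D t \<subseteq> D s"
  using D_char[of s] D_char[of t] by auto

lemma D_F: "t \<le> T \<Longrightarrow> D t \<in> sets (F t)"
proof (induction t)
  case 0
  show ?case using D_0 sets.top[of "F 0"] by simp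
next
  case (Suc t)
  have "D t \<in> sets (F (Suc t))" using Suc Fmono[of t "Suc t"] unfolding subalgebra_def by auto
  moreover have "X (Suc t) -` B \<inter> space M \<in> sets (F (Suc t))"
    using measurable_sets[OF XF[OF Suc.prems] B_meas] Suc.prems by simp
  ultimately have "D t \<inter> (X (Suc t) -` B \<inter> space M) \<in> sets (F (Suc t))" by auto
  moreover have "D (Suc t) = D t \<inter> (X (Suc t) -` B \<inter> space M)" using D_Suc[OF Suc.prems] D_sub by auto
  ultimately show ?case by simp
qed

lemma D_M: "t \<le> T \<Longrightarrow> D t \<in> sets M"
  using D_F subF unfolding subalgebra_def by auto

lemma pair_F: "t \<le> T \<Longrightarrow> s \<le> t \<Longrightarrow> (\<lambda>\<omega>. (X t \<omega>, indicator (D s) \<omega> :: real)) \<in> F t \<rightarrow>\<^sub>M borel \<Otimes>\<^sub>M borel"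
proof -
  assume a: "t \<le> T" "s \<le> t"
  have "D s \<in> sets (F t)" using D_F[of s] Fmono[OF a(2,1)] a unfolding subalgebra_def by auto
  then have "indicator (D s) \<in> borel_measurable (F t)" by simp
  then show ?thesis using XF[OF a(1)] by (intro measurable_Pair) auto
qed

lemma subVA: "t \<le> T \<Longrightarrow> s \<le> t \<Longrightarrow> subalgebra (F t) (VA t s)"
  unfolding subalgebra_def using sets_image_in_sets[OF _ pair_F] by auto

lemma subVA_M: "t \<le> T \<Longrightarrow> s \<le> t \<Longrightarrow> subalgebra M (VA t s)"
proof -
  assume a: "t \<le> T" "s \<le> t"
  show ?thesis using subVA[OF a] subF[OF a(1)] unfolding subalgebra_def by auto
qed

lemma pair_VA: "(\<lambda>\<omega>. (X t \<omega>, indicator (D s) \<omega> :: real)) \<in> VA t s \<rightarrow>\<^sub>M borel \<Otimes>\<^sub>M borel"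
  by (rule measurable_vimage_algebra1) (auto simp: space_pair_measure)

lemma X_VA: "X t \<in> borel_measurable (VA t s)"
  using measurable_compose[OF pair_VA measurable_fst] by (simp add: comp_def)

lemma ind_VA: "(indicator (D s) :: 'a \<Rightarrow> real) \<in> borel_measurable (VA t s)"
  using measurable_compose[OF pair_VA measurable_snd] by (simp add: comp_def)

lemma D_VA: "D s \<in> sets (VA t s)"
proof -
  have "{\<omega>\<in>space (VA t s). indicator (D s) \<omega> = (1::real)} \<in> sets (VA t s)"
    using ind_VA[of s t] by measurable
  moreover have "{\<omega>\<in>space (VA t s). indicator (D s) \<omega> = (1::real)} = D s"
    using D_sub by (auto simp: indicator_def)
  ultimately show ?thesis by simp
qed

lemma subG_H: "subalgebra (VA t s) (G t)"
proof -
  have "sets (G t) \<subseteq> sets (VA t s)"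
    by (rule sets_image_in_sets) (auto intro: X_VA)
  then show ?thesis unfolding subalgebra_def by simp
qed

lemma ind_D_Suc_VA: "Suc t \<le> T \<Longrightarrow> (indicator (D (Suc t)) :: 'a \<Rightarrow> real) \<in> borel_measurable (VA (Suc t) t)"
proof -
  assume a: "Suc t \<le> T"
  have "(\<lambda>\<omega>. indicator (D t) \<omega> * (indicator B (X (Suc t) \<omega>) :: real)) \<in> borel_measurable (VA (Suc t) t)"
    using ind_VA X_VA B_meas by measurable
  moreover have "(indicator (D (Suc t)) :: 'a \<Rightarrow> real) = (\<lambda>\<omega>. indicator (D t) \<omega> * (indicator B (X (Suc t) \<omega>) :: real))"
    by (rule ext) (rule ind_D_Suc[OF a])
  ultimately show ?thesis by simp
qed

lemma subH_VA: "Suc t \<le> T \<Longrightarrow> subalgebra (VA (Suc t) t) (H (Suc t))"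
proof -
  assume a: "Suc t \<le> T"
  have "(\<lambda>\<omega>. (X (Suc t) \<omega>, indicator (D (Suc t)) \<omega> :: real)) \<in> VA (Suc t) t \<rightarrow>\<^sub>M borel \<Otimes>\<^sub>M borel"
    using X_VA ind_D_Suc_VA[OF a] by (intro measurable_Pair) auto
  then have "sets (H (Suc t)) \<subseteq> sets (VA (Suc t) t)"
    by (intro sets_image_in_sets) auto
  then show ?thesis unfolding subalgebra_def by simp
qed

lemma sub_trans: "subalgebra A B' \<Longrightarrow> subalgebra B' C \<Longrightarrow> subalgebra A C"
  unfolding subalgebra_def by auto

lemma meas_sub: "subalgebra A B' \<Longrightarrow> f \<in> measurable B' N \<Longrightarrow> f \<in> measurable A N"
  by (rule measurable_from_subalg)

end

context mk
begin

definition eA :: "nat \<Rightarrow> 'a set \<Rightarrow> 'a \<Rightarrow> real" where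
  "eA t A = real_cond_exp M (H t) (indicator A)"

definition R :: "nat \<Rightarrow> ('a \<Rightarrow> real) \<Rightarrow> bool" where
  "R t Y \<longleftrightarrow> (\<forall>A\<in>sets (F t). (\<integral>x. indicator A x * Y x \<partial>M) = (\<integral>x. eA t A x * Y x \<partial>M))"

lemma sfH: "t \<le> T \<Longrightarrow> sigma_finite_subalgebra M (H t)"
  by (rule sfs[OF subVA_M]) auto

lemma sfF: "t \<le> T \<Longrightarrow> sigma_finite_subalgebra M (F t)"
  by (rule sfs[OF subF])

lemma int_ind: "A \<in> sets M \<Longrightarrow> integrable M (indicator A :: 'a \<Rightarrow> real)"
proof -
  assume a: "A \<in> sets M"
  have "emeasure M A < \<top>" using emeasure_finite[of A] less_top by blast
  then show ?thesis using a by (intro integrable_real_indicator) auto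
qed

lemma int_bdd: "(f :: 'a \<Rightarrow> real) \<in> borel_measurable M \<Longrightarrow> (\<And>x. x \<in> space M \<Longrightarrow> \<bar>f x\<bar> \<le> c) \<Longrightarrow> integrable M f"
  by (rule integrable_const_bound[of f c]) auto

lemma FM: "t \<le> T \<Longrightarrow> A \<in> sets (F t) \<Longrightarrow> A \<in> sets M"
  using subF unfolding subalgebra_def by auto

lemma eA_HM:
  shows "eA t A \<in> borel_measurable (H t)" "eA t A \<in> borel_measurable M"
  unfolding eA_def by auto

lemma eA_F: "t \<le> T \<Longrightarrow> eA t A \<in> borel_measurable (F t)"
  using meas_sub[OF subVA[of t t] eA_HM(1)] by auto

lemma eA_bnd: "t \<le> T \<Longrightarrow> A \<in> sets M \<Longrightarrow> AE x in M. 0 \<le> eA t A x \<and> eA t A x \<le> 1"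
proof -
  assume a: "t \<le> T" "A \<in> sets M"
  interpret Hi: sigma_finite_subalgebra M "H t" by (rule sfH[OF a(1)])
  have "AE x in M. 0 \<le> eA t A x" unfolding eA_def
    by (rule Hi.real_cond_exp_ge_c[OF int_ind[OF a(2)]]) auto
  moreover have "AE x in M. eA t A x \<le> 1" unfolding eA_def
    by (rule Hi.real_cond_exp_le_c[OF int_ind[OF a(2)]]) (auto simp: indicator_def)
  ultimately show ?thesis by auto
qed

lemma int_eA: "t \<le> T \<Longrightarrow> A \<in> sets M \<Longrightarrow> integrable M Y \<Longrightarrow> integrable M (\<lambda>x. eA t A x * Y x)"
proof -
  assume a: "t \<le> T" "A \<in> sets M" "integrable M Y"
  have [measurable]: "Y \<in> borel_measurable M" using a(3) by auto
  have [measurable]: "eA t A \<in> borel_measurable M" by (rule eA_HM)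
  show ?thesis
  proof (rule Bochner_Integration.integrable_bound[OF a(3)])
    show "(\<lambda>x. eA t A x * Y x) \<in> borel_measurable M" by measurable
    show "AE x in M. norm (eA t A x * Y x) \<le> norm (Y x)"
      using eA_bnd[OF a(1,2)]
    proof eventually_elim
      case (elim x)
      then show ?case by (simp add: abs_mult mult_left_le_one_le)
    qed
  qed
qed

lemma R_version:
  assumes tT: "t \<le> T" and intY: "integrable M Y" and hH: "h \<in> borel_measurable (H t)"
    and ae: "AE x in M. real_cond_exp M (F t) Y x = h x"
  shows "R t Y"
  unfolding R_def
proof
  fix A assume AF: "A \<in> sets (F t)"
  interpret Fi: sigma_finite_subalgebra M "F t" by (rule sfF[OF tT])
  interpret Hi: sigma_finite_subalgebra M "H t" by (rule sfH[OF tT])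
  have AM[measurable]: "A \<in> sets M" using FM[OF tT AF] .
  have YM[measurable]: "Y \<in> borel_measurable M" using intY by auto
  have hM[measurable]: "h \<in> borel_measurable M" using meas_sub[OF subVA_M[OF tT order.refl] hH] .
  have inth: "integrable M h" using integrable_cong_AE_imp[OF Fi.real_cond_exp_int(1)[OF intY] hM ae] .
  have indF: "(indicator A :: 'a \<Rightarrow> real) \<in> borel_measurable (F t)" using AF by simp
  have eAF: "eA t A \<in> borel_measurable (F t)" by (rule eA_F[OF tT])
  have "(\<integral>x. indicator A x * Y x \<partial>M) = (\<integral>x. indicator A x * real_cond_exp M (F t) Y x \<partial>M)"
    by (rule Fi.real_cond_exp_intg(2)[symmetric, OF _ indF YM])
       (use integrable_mult_indicator[OF AM intY] in simp)
  also have "\<dots> = (\<integral>x. indicator A x * h x \<partial>M)"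
    by (rule integral_cong_AE) (use ae in \<open>auto\<close>)
  also have "\<dots> = (\<integral>x. h x * indicator A x \<partial>M)" by (simp add: mult.commute)
  also have "\<dots> = (\<integral>x. h x * eA t A x \<partial>M)" unfolding eA_def
    by (rule Hi.real_cond_exp_intg(2)[symmetric, OF _ hH]) (auto intro: integrable_real_mult_indicator[OF AM inth])
  also have "\<dots> = (\<integral>x. eA t A x * real_cond_exp M (F t) Y x \<partial>M)"
    using eA_HM(2)[of t A] by (intro integral_cong_AE) (use ae in \<open>auto simp: mult.commute\<close>)
  also have "\<dots> = (\<integral>x. eA t A x * Y x \<partial>M)"
    by (rule Fi.real_cond_exp_intg(2)[OF int_eA[OF tT AM intY] eAF YM])
  finally show "(\<integral>x. indicator A x * Y x \<partial>M) = (\<integral>x. eA t A x * Y x \<partial>M)" .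
qed

lemma R_cond:
  assumes tT: "t \<le> T" and intY: "integrable M Y" and RY: "R t Y"
  shows "AE x in M. real_cond_exp M (F t) Y x = real_cond_exp M (H t) Y x"
proof -
  interpret Fi: sigma_finite_subalgebra M "F t" by (rule sfF[OF tT])
  interpret Hi: sigma_finite_subalgebra M "H t" by (rule sfH[OF tT])
  have YM[measurable]: "Y \<in> borel_measurable M" using intY by auto
  have cH: "real_cond_exp M (H t) Y \<in> borel_measurable (H t)" by simp
  have cF: "real_cond_exp M (H t) Y \<in> borel_measurable (F t)" using meas_sub[OF subVA[OF tT order.refl] cH] .
  have intc: "integrable M (real_cond_exp M (H t) Y)" by (rule Hi.real_cond_exp_int(1)[OF intY])
  show ?thesis
  proof (rule Fi.real_cond_exp_charact[OF _ intY intc cF])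
    fix A assume AF: "A \<in> sets (F t)"
    have AM[measurable]: "A \<in> sets M" using FM[OF tT AF] .
    have "(\<integral>x. indicator A x * real_cond_exp M (H t) Y x \<partial>M) = (\<integral>x. real_cond_exp M (H t) Y x * indicator A x \<partial>M)"
      by (simp add: mult.commute)
    also have "\<dots> = (\<integral>x. real_cond_exp M (H t) Y x * eA t A x \<partial>M)" unfolding eA_def
      by (rule Hi.real_cond_exp_intg(2)[symmetric, OF _ cH]) (auto intro: integrable_real_mult_indicator[OF AM intc])
    also have "\<dots> = (\<integral>x. eA t A x * real_cond_exp M (H t) Y x \<partial>M)" by (simp add: mult.commute)
    also have "\<dots> = (\<integral>x. eA t A x * Y x \<partial>M)"
      by (rule Hi.real_cond_exp_intg(2)[OF int_eA[OF tT AM intY] eA_HM(1) YM])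
    also have "\<dots> = (\<integral>x. indicator A x * Y x \<partial>M)" using RY AF unfolding R_def by auto
    finally show "(\<integral>x\<in>A. Y x \<partial>M) = (\<integral>x\<in>A. real_cond_exp M (H t) Y x \<partial>M)"
      unfolding set_lebesgue_integral_def by simp
  qed
qed

lemma R_add:
  assumes tT: "t \<le> T" and iu: "integrable M u" and iv: "integrable M v" and Ru: "R t u" and Rv: "R t v"
  shows "R t (\<lambda>x. u x + v x)"
  unfolding R_def
proof
  fix A assume AF: "A \<in> sets (F t)"
  have AM: "A \<in> sets M" using FM[OF tT AF] .
  have i1: "integrable M (\<lambda>x. indicator A x * u x)" "integrable M (\<lambda>x. indicator A x * v x)"
    using integrable_mult_indicator[OF AM iu] integrable_mult_indicator[OF AM iv] by simp_all
  have "(\<integral>x. indicator A x * (u x + v x) \<partial>M) = (\<integral>x. indicator A x * u x \<partial>M) + (\<integral>x. indicator A x * v x \<partial>M)"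
    using i1 by (simp add: distrib_left)
  also have "\<dots> = (\<integral>x. eA t A x * u x \<partial>M) + (\<integral>x. eA t A x * v x \<partial>M)" using Ru Rv AF unfolding R_def by auto
  also have "\<dots> = (\<integral>x. eA t A x * (u x + v x) \<partial>M)"
    using int_eA[OF tT AM iu] int_eA[OF tT AM iv] by (simp add: distrib_left)
  finally show "(\<integral>x. indicator A x * (u x + v x) \<partial>M) = (\<integral>x. eA t A x * (u x + v x) \<partial>M)" .
qed

lemma R_diff:
  assumes tT: "t \<le> T" and iu: "integrable M u" and iv: "integrable M v" and Ru: "R t u" and Rv: "R t v"
  shows "R t (\<lambda>x. u x - v x)"
  unfolding R_def
proof
  fix A assume AF: "A \<in> sets (F t)"
  have AM: "A \<in> sets M" using FM[OF tT AF] .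
  have i1: "integrable M (\<lambda>x. indicator A x * u x)" "integrable M (\<lambda>x. indicator A x * v x)"
    using integrable_mult_indicator[OF AM iu] integrable_mult_indicator[OF AM iv] by simp_all
  have "(\<integral>x. indicator A x * (u x - v x) \<partial>M) = (\<integral>x. indicator A x * u x \<partial>M) - (\<integral>x. indicator A x * v x \<partial>M)"
    using i1 by (simp add: right_diff_distrib)
  also have "\<dots> = (\<integral>x. eA t A x * u x \<partial>M) - (\<integral>x. eA t A x * v x \<partial>M)" using Ru Rv AF unfolding R_def by auto
  also have "\<dots> = (\<integral>x. eA t A x * (u x - v x) \<partial>M)"
    using int_eA[OF tT AM iu] int_eA[OF tT AM iv] by (simp add: right_diff_distrib)
  finally show "(\<integral>x. indicator A x * (u x - v x) \<partial>M) = (\<integral>x. eA t A x * (u x - v x) \<partial>M)" .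
qed

lemma R_cmult: "R t u \<Longrightarrow> R t (\<lambda>x. c * u x)"
  unfolding R_def
proof
  fix A assume Ru: "\<forall>A\<in>sets (F t). (\<integral>x. indicator A x * u x \<partial>M) = (\<integral>x. eA t A x * u x \<partial>M)"
    and AF: "A \<in> sets (F t)"
  have "(\<integral>x. indicator A x * (c * u x) \<partial>M) = c * (\<integral>x. indicator A x * u x \<partial>M)"
    by (simp add: mult.left_commute)
  also have "\<dots> = c * (\<integral>x. eA t A x * u x \<partial>M)" using Ru AF by auto
  also have "\<dots> = (\<integral>x. eA t A x * (c * u x) \<partial>M)" by (simp add: mult.left_commute)
  finally show "(\<integral>x. indicator A x * (c * u x) \<partial>M) = (\<integral>x. eA t A x * (c * u x) \<partial>M)" .
qed

lemma R_cong: "(\<And>x. x \<in> space M \<Longrightarrow> u x = v x) \<Longrightarrow> R t u \<Longrightarrow> R t v"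
  unfolding R_def
proof
  fix A assume e: "\<And>x. x \<in> space M \<Longrightarrow> u x = v x"
    and Ru: "\<forall>A\<in>sets (F t). (\<integral>x. indicator A x * u x \<partial>M) = (\<integral>x. eA t A x * u x \<partial>M)"
    and AF: "A \<in> sets (F t)"
  have "(\<integral>x. indicator A x * v x \<partial>M) = (\<integral>x. indicator A x * u x \<partial>M)" by (rule Bochner_Integration.integral_cong) (auto simp: e)
  also have "\<dots> = (\<integral>x. eA t A x * u x \<partial>M)" using Ru AF by auto
  also have "\<dots> = (\<integral>x. eA t A x * v x \<partial>M)" by (rule Bochner_Integration.integral_cong) (auto simp: e)
  finally show "(\<integral>x. indicator A x * v x \<partial>M) = (\<integral>x. eA t A x * v x \<partial>M)" .
qed

lemma R_lim:
  assumes tT: "t \<le> T" and UM: "\<And>i. U i \<in> borel_measurable M" and uM: "u \<in> borel_measurable M"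
    and iu: "integrable M u" and lim: "\<And>x. x \<in> space M \<Longrightarrow> (\<lambda>i. U i x) \<longlonglongrightarrow> u x"
    and bnd: "\<And>i x. x \<in> space M \<Longrightarrow> \<bar>U i x\<bar> \<le> \<bar>u x\<bar>" and RU: "\<And>i. R t (U i)"
  shows "R t u"
  unfolding R_def
proof
  fix A assume AF: "A \<in> sets (F t)"
  have AM: "A \<in> sets M" using FM[OF tT AF] .
  have [measurable]: "A \<in> sets M" "eA t A \<in> borel_measurable M" using AM eA_HM by auto
  note [measurable] = UM uM
  have iw: "integrable M (\<lambda>x. \<bar>u x\<bar>)" using iu by auto
  have l1: "(\<lambda>i. \<integral>x. indicator A x * U i x \<partial>M) \<longlonglongrightarrow> (\<integral>x. indicator A x * u x \<partial>M)"
  proof (rule integral_dominated_convergence[where w="\<lambda>x. \<bar>u x\<bar>"])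
    show "(\<lambda>x. indicator A x * u x) \<in> borel_measurable M" by measurable
    show "\<And>i. (\<lambda>x. indicator A x * U i x) \<in> borel_measurable M" by measurable
    show "integrable M (\<lambda>x. \<bar>u x\<bar>)" by (rule iw)
    show "AE x in M. (\<lambda>i. indicator A x * U i x) \<longlonglongrightarrow> indicator A x * u x"
      by (rule AE_I2) (intro tendsto_mult tendsto_const lim)
    show "\<And>i. AE x in M. norm (indicator A x * U i x) \<le> \<bar>u x\<bar>"
      by (rule AE_I2) (auto simp: indicator_def bnd)
  qed
  have l2: "(\<lambda>i. \<integral>x. eA t A x * U i x \<partial>M) \<longlonglongrightarrow> (\<integral>x. eA t A x * u x \<partial>M)"
  proof (rule integral_dominated_convergence[where w="\<lambda>x. \<bar>u x\<bar>"])
    show "(\<lambda>x. eA t A x * u x) \<in> borel_measurable M" by measurable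
    show "\<And>i. (\<lambda>x. eA t A x * U i x) \<in> borel_measurable M" by measurable
    show "integrable M (\<lambda>x. \<bar>u x\<bar>)" by (rule iw)
    show "AE x in M. (\<lambda>i. eA t A x * U i x) \<longlonglongrightarrow> eA t A x * u x"
      by (rule AE_I2) (intro tendsto_mult tendsto_const lim)
    show "\<And>i. AE x in M. norm (eA t A x * U i x) \<le> \<bar>u x\<bar>"
    proof -
      fix i show "AE x in M. norm (eA t A x * U i x) \<le> \<bar>u x\<bar>"
        using eA_bnd[OF tT AM] AE_space
      proof eventually_elim
        case (elim x)
        then have "\<bar>eA t A x\<bar> * \<bar>U i x\<bar> \<le> 1 * \<bar>u x\<bar>"
          by (intro mult_mono) (auto simp: bnd)
        then show ?case by (simp add: abs_mult)
      qed
    qed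
  qed
  have "(\<lambda>i. \<integral>x. indicator A x * U i x \<partial>M) = (\<lambda>i. \<integral>x. eA t A x * U i x \<partial>M)"
    using RU AF unfolding R_def by auto
  with l1 l2 show "(\<integral>x. indicator A x * u x \<partial>M) = (\<integral>x. eA t A x * u x \<partial>M)"
    using LIMSEQ_unique by metis
qed

end

context mk
begin

lemma markov_step: "t < T \<Longrightarrow> C \<in> sets borel \<Longrightarrow>
  AE \<omega> in M. real_cond_exp M (F t) (\<lambda>\<omega>. indicator C (X (Suc t) \<omega>)) \<omega> =
              real_cond_exp M (G t) (\<lambda>\<omega>. indicator C (X (Suc t) \<omega>)) \<omega>"
  using markov unfolding markov_chain_def by auto

lemma H_F: "t \<le> T \<Longrightarrow> S \<in> sets (H t) \<Longrightarrow> S \<in> sets (F t)"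
  using subVA[of t t] unfolding subalgebra_def by auto

lemma R_piece:
  assumes tT: "t < T" and SH: "S \<in> sets (H t)" and CB: "C \<in> sets borel"
  shows "R t (\<lambda>x. indicator S x * indicator C (X (Suc t) x))"
proof -
  have tT': "t \<le> T" using tT by simp
  interpret Fi: sigma_finite_subalgebra M "F t" by (rule sfF[OF tT'])
  define Z :: "'a \<Rightarrow> real" where "Z = (\<lambda>x. indicator C (X (Suc t) x))"
  have XM'[measurable]: "X (Suc t) \<in> borel_measurable M" using XM tT by simp
  have [measurable]: "C \<in> sets borel" by (rule CB)
  have SF: "S \<in> sets (F t)" using H_F[OF tT' SH] .
  have SM[measurable]: "S \<in> sets M" using FM[OF tT' SF] .
  have ZM[measurable]: "Z \<in> borel_measurable M" unfolding Z_def by measurable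
  have iSZ: "integrable M (\<lambda>x. indicator S x * Z x)"
    by (rule int_bdd[where c=1]) (auto simp: Z_def indicator_def)
  have indSF: "(indicator S :: 'a \<Rightarrow> real) \<in> borel_measurable (F t)" using SF by simp
  have e1: "AE x in M. real_cond_exp M (F t) (\<lambda>x. indicator S x * Z x) x = indicator S x * real_cond_exp M (F t) Z x"
    by (rule Fi.real_cond_exp_mult[OF indSF ZM iSZ])
  have e2: "AE x in M. real_cond_exp M (F t) Z x = real_cond_exp M (G t) Z x"
    unfolding Z_def by (rule markov_step[OF tT CB])
  have hH: "(\<lambda>x. indicator S x * real_cond_exp M (G t) Z x) \<in> borel_measurable (H t)"
  proof -
    have "real_cond_exp M (G t) Z \<in> borel_measurable (H t)"
      using meas_sub[OF subG_H borel_measurable_cond_exp] by blast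
    moreover have "(indicator S :: 'a \<Rightarrow> real) \<in> borel_measurable (H t)" using SH by simp
    ultimately show ?thesis by (intro borel_measurable_times)
  qed
  have "R t (\<lambda>x. indicator S x * Z x)"
    by (rule R_version[OF tT' iSZ hH]) (use e1 e2 in auto)
  then show ?thesis unfolding Z_def .
qed

lemma R_base:
  assumes tT: "t < T" and A: "A \<in> sets (VA (Suc t) t)"
  shows "R t (indicator A)"
proof -
  have tT': "t \<le> T" using tT by simp
  have "sets (VA (Suc t) t) = {(\<lambda>\<omega>. (X (Suc t) \<omega>, indicator (D t) \<omega> :: real)) -` C \<inter> space M | C. C \<in> sets (borel \<Otimes>\<^sub>M borel)}"
    by (rule sets_vimage_algebra2) (auto simp: space_pair_measure)
  then obtain C where C: "C \<in> sets (borel \<Otimes>\<^sub>M borel)"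
    and AC: "A = (\<lambda>\<omega>. (X (Suc t) \<omega>, indicator (D t) \<omega> :: real)) -` C \<inter> space M"
    using A by auto
  define C1 where "C1 = (\<lambda>y. (y, 1::real)) -` C"
  define C0 where "C0 = (\<lambda>y. (y, 0::real)) -` C"
  have C1B: "C1 \<in> sets borel"
  proof -
    have "(\<lambda>y::'x. (y, 1::real)) \<in> borel \<rightarrow>\<^sub>M borel \<Otimes>\<^sub>M borel" by measurable
    from measurable_sets[OF this C] show ?thesis unfolding C1_def by simp
  qed
  have C0B: "C0 \<in> sets borel"
  proof -
    have "(\<lambda>y::'x. (y, 0::real)) \<in> borel \<rightarrow>\<^sub>M borel \<Otimes>\<^sub>M borel" by measurable
    from measurable_sets[OF this C] show ?thesis unfolding C0_def by simp
  qed
  have DH: "D t \<in> sets (H t)" by (rule D_VA)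
  have DcH: "space M - D t \<in> sets (H t)"
    using sets.Diff[OF sets.top DH] by simp
  have R1: "R t (\<lambda>x. indicator (D t) x * indicator C1 (X (Suc t) x))" by (rule R_piece[OF tT DH C1B])
  have R0: "R t (\<lambda>x. indicator (space M - D t) x * indicator C0 (X (Suc t) x))" by (rule R_piece[OF tT DcH C0B])
  have XM'[measurable]: "X (Suc t) \<in> borel_measurable M" using XM tT by simp
  have [measurable]: "C1 \<in> sets borel" "C0 \<in> sets borel" "D t \<in> sets M" "space M - D t \<in> sets M"
    using C1B C0B D_M[OF tT'] by auto
  have i1: "integrable M (\<lambda>x. indicator (D t) x * indicator C1 (X (Suc t) x) :: real)"
    by (rule int_bdd[where c=1]) (auto simp: indicator_def)
  have i0: "integrable M (\<lambda>x. indicator (space M - D t) x * indicator C0 (X (Suc t) x) :: real)"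
    by (rule int_bdd[where c=1]) (auto simp: indicator_def)
  have "R t (\<lambda>x. indicator (D t) x * indicator C1 (X (Suc t) x) + indicator (space M - D t) x * indicator C0 (X (Suc t) x))"
    by (rule R_add[OF tT' i1 i0 R1 R0])
  then show ?thesis
  proof (rule R_cong[rotated])
    fix x assume x: "x \<in> space M"
    show "indicator (D t) x * indicator C1 (X (Suc t) x) + indicator (space M - D t) x * indicator C0 (X (Suc t) x)
          = (indicator A x :: real)"
      using x unfolding AC C1_def C0_def by (auto simp: indicator_def)
  qed
qed

lemma R_zero: "R t (\<lambda>x. 0)"
  unfolding R_def by simp

lemma R_nonneg:
  assumes tT: "t < T" and um: "u \<in> borel_measurable (VA (Suc t) t)" and un: "\<And>x. 0 \<le> u x"
  shows "integrable M u \<longrightarrow> R t u"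
  using um un
proof (induct rule: borel_measurable_induct_real)
  case (set A)
  then show ?case using R_base[OF tT] by auto
next
  case (mult u c)
  show ?case
  proof
    assume i: "integrable M (\<lambda>x. c * u x)"
    show "R t (\<lambda>x. c * u x)"
    proof (cases "c = 0")
      case True
      then show ?thesis using R_zero by simp
    next
      case False
      then have "integrable M u" using i by simp
      then show ?thesis using mult R_cmult by blast
    qed
  qed
next
  case (add u v)
  have sub: "subalgebra M (VA (Suc t) t)" using subVA_M[of "Suc t" t] tT by simp
  have [measurable]: "u \<in> borel_measurable M" "v \<in> borel_measurable M"
    using meas_sub[OF sub add(1)] meas_sub[OF sub add(4)] by auto
  show ?case
  proof
    assume i: "integrable M (\<lambda>x. v x + u x)"
    have iu: "integrable M u"
      by (rule Bochner_Integration.integrable_bound[OF i]) (auto simp: add(2) add(5))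
    have iv: "integrable M v"
      by (rule Bochner_Integration.integrable_bound[OF i]) (auto simp: add(2) add(5))
    show "R t (\<lambda>x. v x + u x)" using R_add[OF _ iv iu] add tT iu iv by auto
  qed
next
  case (seq U)
  have sub: "subalgebra M (VA (Suc t) t)" using subVA_M[of "Suc t" t] tT by simp
  have UM: "\<And>i. U i \<in> borel_measurable M" using meas_sub[OF sub seq(1)] by auto
  have uM: "u \<in> borel_measurable M" using meas_sub[OF sub um] .
  show ?case
  proof
    assume iu: "integrable M u"
    have le: "\<And>i x. x \<in> space M \<Longrightarrow> U i x \<le> u x"
    proof -
      fix i x assume x: "x \<in> space M"
      have "incseq (\<lambda>i. U i x)" using seq(4) unfolding incseq_def le_fun_def by auto
      then show "U i x \<le> u x" using incseq_le seq(5) x by auto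
    qed
    have bnd: "\<And>i x. x \<in> space M \<Longrightarrow> \<bar>U i x\<bar> \<le> \<bar>u x\<bar>"
      using le seq(2) by (metis abs_of_nonneg order.trans)
    have iU: "\<And>i. integrable M (U i)"
      by (rule Bochner_Integration.integrable_bound[OF iu UM]) (auto intro!: AE_I2 simp: bnd)
    have RU: "\<And>i. R t (U i)" using seq(3) iU by auto
    show "R t u"
      by (rule R_lim[OF _ UM uM iu _ bnd RU]) (use tT seq(5) in auto)
  qed
qed

lemma Mkv:
  assumes tT: "t < T" and YK: "Y \<in> borel_measurable (VA (Suc t) t)" and iY: "integrable M Y"
  shows "AE x in M. real_cond_exp M (F t) Y x = real_cond_exp M (H t) Y x"
proof -
  have tT': "t \<le> T" using tT by simp
  have sub: "subalgebra M (VA (Suc t) t)" using subVA_M[of "Suc t" t] tT by simp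
  have [measurable]: "Y \<in> borel_measurable (VA (Suc t) t)" by (rule YK)
  have YM[measurable]: "Y \<in> borel_measurable M" using meas_sub[OF sub YK] .
  have pK: "(\<lambda>x. max 0 (Y x)) \<in> borel_measurable (VA (Suc t) t)" by measurable
  have nK: "(\<lambda>x. max 0 (- Y x)) \<in> borel_measurable (VA (Suc t) t)" by measurable
  have ip: "integrable M (\<lambda>x. max 0 (Y x))" using iY by auto
  have in': "integrable M (\<lambda>x. max 0 (- Y x))" using iY by auto
  have Rp: "R t (\<lambda>x. max 0 (Y x))" using R_nonneg[OF tT pK] ip by auto
  have Rn: "R t (\<lambda>x. max 0 (- Y x))" using R_nonneg[OF tT nK] in' by auto
  have "R t (\<lambda>x. max 0 (Y x) - max 0 (- Y x))" by (rule R_diff[OF tT' ip in' Rp Rn])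
  then have "R t Y" by (rule R_cong[rotated]) auto
  then show ?thesis by (rule R_cond[OF tT' iY])
qed

end

lemma (in sigma_finite_subalgebra) cond_if:
  assumes DF: "D' \<in> sets F" and cF: "c \<in> F \<rightarrow>\<^sub>M count_space UNIV" and VF: "V \<in> borel_measurable F"
    and iV: "integrable M (\<lambda>\<omega>. indicator D' \<omega> * V \<omega>)" and iZ: "integrable M Z"
  shows "AE \<omega> in M. real_cond_exp M F (\<lambda>\<omega>. indicator D' \<omega> * (if c \<omega> then V \<omega> else Z \<omega>)) \<omega> =
                     indicator D' \<omega> * (if c \<omega> then V \<omega> else real_cond_exp M F Z \<omega>)"
proof -
  have [measurable]: "D' \<in> sets F" "c \<in> F \<rightarrow>\<^sub>M count_space UNIV" "V \<in> borel_measurable F" using assms by auto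
  have DM[measurable]: "D' \<in> sets M" using DF subalg unfolding subalgebra_def by auto
  have cM[measurable]: "c \<in> M \<rightarrow>\<^sub>M count_space UNIV" using measurable_from_subalg[OF subalg cF] .
  have VM[measurable]: "V \<in> borel_measurable M" using measurable_from_subalg[OF subalg VF] .
  have ZM[measurable]: "Z \<in> borel_measurable M" using iZ by auto
  define f1 where "f1 = (\<lambda>\<omega>. indicator D' \<omega> * (if c \<omega> then 1 else 0) * V \<omega>)"
  define b where "b = (\<lambda>\<omega>. indicator D' \<omega> * (if c \<omega> then 0 else 1) :: real)"
  have f1F: "f1 \<in> borel_measurable F" unfolding f1_def by measurable
  have f1M[measurable]: "f1 \<in> borel_measurable M" unfolding f1_def by measurable
  have bF: "b \<in> borel_measurable F" unfolding b_def by measurable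
  have bM[measurable]: "b \<in> borel_measurable M" unfolding b_def by measurable
  have if1: "integrable M f1"
    by (rule Bochner_Integration.integrable_bound[OF iV f1M]) (auto intro!: AE_I2 simp: f1_def indicator_def)
  have ibZ: "integrable M (\<lambda>\<omega>. b \<omega> * Z \<omega>)"
    by (rule Bochner_Integration.integrable_bound[OF iZ]) (auto intro!: AE_I2 simp: b_def indicator_def)
  have eq: "(\<lambda>\<omega>. indicator D' \<omega> * (if c \<omega> then V \<omega> else Z \<omega>)) = (\<lambda>\<omega>. f1 \<omega> + b \<omega> * Z \<omega>)"
    by (auto simp: f1_def b_def fun_eq_iff indicator_def)
  have "AE \<omega> in M. real_cond_exp M F (\<lambda>\<omega>. f1 \<omega> + b \<omega> * Z \<omega>) \<omega> = real_cond_exp M F f1 \<omega> + real_cond_exp M F (\<lambda>\<omega>. b \<omega> * Z \<omega>) \<omega>"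
    by (rule real_cond_exp_add[OF if1 ibZ])
  moreover have "AE \<omega> in M. real_cond_exp M F f1 \<omega> = f1 \<omega>" by (rule real_cond_exp_F_meas[OF if1 f1F])
  moreover have "AE \<omega> in M. real_cond_exp M F (\<lambda>\<omega>. b \<omega> * Z \<omega>) \<omega> = b \<omega> * real_cond_exp M F Z \<omega>"
    by (rule real_cond_exp_mult[OF bF ZM ibZ])
  ultimately show ?thesis unfolding eq
    by eventually_elim (auto simp: f1_def b_def indicator_def)
qed

context mk
begin

abbreviation "SBE \<theta> t \<equiv> stop_before_exit M T X B \<theta> t"
abbreviation "Nf \<theta> t \<equiv> stopped_payoff T X B \<delta> g \<theta> t"
abbreviation "Qf \<theta> t \<equiv> (indicator (SBE \<theta> t) :: 'a \<Rightarrow> real)"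

lemma exit_fin: "exit_time T X B \<omega> \<noteq> \<infinity> \<Longrightarrow> exit_time T X B \<omega> \<le> enat T"
proof -
  assume a: "exit_time T X B \<omega> \<noteq> \<infinity>"
  have ex: "\<exists>t. t \<le> T \<and> X t \<omega> \<notin> B"
  proof (rule ccontr)
    assume "\<not> (\<exists>t. t \<le> T \<and> X t \<omega> \<notin> B)"
    then have "exit_time T X B \<omega> = \<infinity>" unfolding exit_time_def by simp
    then show False using a by simp
  qed
  then have e: "exit_time T X B \<omega> = enat (LEAST t. t \<le> T \<and> X t \<omega> \<notin> B)" unfolding exit_time_def by simp
  have "(LEAST t. t \<le> T \<and> X t \<omega> \<notin> B) \<le> T"
    by (rule LeastI2_ex[OF ex]) simp
  then show ?thesis unfolding e by simp
qed

lemma SBE_T: "SBE \<theta> T = D T"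
proof -
  have "\<And>\<omega>. lhd (next_stop T \<theta> T \<omega>) (exit_time T X B \<omega>) \<longleftrightarrow> enat T < exit_time T X B \<omega>"
  proof -
    fix \<omega>
    show "lhd (next_stop T \<theta> T \<omega>) (exit_time T X B \<omega>) \<longleftrightarrow> enat T < exit_time T X B \<omega>"
    proof (cases "exit_time T X B \<omega> = \<infinity>")
      case True
      then show ?thesis unfolding next_stop_T lhd_inf by simp
    next
      case False
      then have "\<not> enat T < exit_time T X B \<omega>" using exit_fin[of \<omega>] by (simp add: not_less)
      then show ?thesis unfolding next_stop_T lhd_inf using False by simp
    qed
  qed
  then show ?thesis unfolding stop_before_exit_def Dset_def by simp
qed

lemma lhd_D: "\<omega> \<in> space M \<Longrightarrow> lhd (next_stop T \<theta> t \<omega>) (exit_time T X B \<omega>) \<Longrightarrow> \<omega> \<in> D t"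
proof -
  assume \<omega>: "\<omega> \<in> space M" and l: "lhd (next_stop T \<theta> t \<omega>) (exit_time T X B \<omega>)"
  show "\<omega> \<in> D t"
  proof (cases "next_stop T \<theta> t \<omega>")
    case (enat s)
    have "t < s" using next_stop_enat[OF enat] by simp
    then have 1: "enat t < enat s" by simp
    have 2: "enat s < exit_time T X B \<omega>" using l enat lhd_enat by simp
    have "enat t < exit_time T X B \<omega>" using less_trans[OF 1 2] .
    then show ?thesis using \<omega> unfolding Dset_def by simp
  next
    case infinity
    then have "exit_time T X B \<omega> = \<infinity>" using l lhd_inf by simp
    then show ?thesis using \<omega> unfolding Dset_def by simp
  qed
qed

lemma SBE_Suc:
  assumes tT: "t < T" and \<omega>: "\<omega> \<in> space M"
  shows "\<omega> \<in> SBE \<theta> t \<longleftrightarrow> \<omega> \<in> D (Suc t) \<and> (\<theta> (Suc t) \<omega> \<or> \<omega> \<in> SBE \<theta> (Suc t))"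
proof (cases "\<theta> (Suc t) \<omega>")
  case True
  then show ?thesis using \<omega> unfolding stop_before_exit_def next_stop_Suc[OF tT] Dset_def
    by (auto simp: lhd_enat)
next
  case False
  have "\<omega> \<in> SBE \<theta> (Suc t) \<Longrightarrow> \<omega> \<in> D (Suc t)"
    using lhd_D \<omega> unfolding stop_before_exit_def by auto
  then show ?thesis using False \<omega> unfolding stop_before_exit_def next_stop_Suc[OF tT]
    by auto
qed

lemma Qf_Suc: "t < T \<Longrightarrow> \<omega> \<in> space M \<Longrightarrow>
    Qf \<theta> t \<omega> = indicator (D (Suc t)) \<omega> * (if \<theta> (Suc t) \<omega> then 1 else Qf \<theta> (Suc t) \<omega>)"
  using SBE_Suc[of t \<omega> \<theta>] by (auto simp: indicator_def)

lemma Qf_T: "Qf \<theta> T = indicator (D T)"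
  by (simp add: SBE_T)

lemma Nf_T: "Nf \<theta> T \<omega> = 0"
  unfolding stopped_payoff_def next_stop_T by simp

lemma Nf_Suc:
  assumes tT: "t < T" and \<omega>: "\<omega> \<in> space M"
  shows "Nf \<theta> t \<omega> = indicator (D (Suc t)) \<omega> * (if \<theta> (Suc t) \<omega> then GV (Suc t) \<omega> else Nf \<theta> (Suc t) \<omega>)"
proof (cases "\<theta> (Suc t) \<omega>")
  case True
  then show ?thesis using \<omega> unfolding stopped_payoff_def next_stop_Suc[OF tT] Dset_def
    by (auto simp: lhd_enat indicator_def)
next
  case False
  have "lhd (next_stop T \<theta> (Suc t) \<omega>) (exit_time T X B \<omega>) \<Longrightarrow> \<omega> \<in> D (Suc t)"
    using lhd_D \<omega> by auto
  then show ?thesis using False \<omega> unfolding stopped_payoff_def next_stop_Suc[OF tT]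
    by (auto simp: indicator_def)
qed

lemma Gm_ge: "s \<le> T \<Longrightarrow> \<omega> \<in> D s \<Longrightarrow> \<bar>GV s \<omega>\<bar> \<le> Gm \<omega>"
proof -
  assume a: "s \<le> T" "\<omega> \<in> D s"
  have "\<bar>GV s \<omega>\<bar> * indicator (D s) \<omega> \<le> Gm \<omega>"
  proof (rule Max_ge)
    show "finite ((\<lambda>t. \<bar>GV t \<omega>\<bar> * indicator (D t) \<omega>) ` {0..T})" by simp
    show "\<bar>GV s \<omega>\<bar> * indicator (D s) \<omega> \<in> (\<lambda>t. \<bar>GV t \<omega>\<bar> * indicator (D t) \<omega>) ` {0..T}"
      using a(1) by auto
  qed
  then show ?thesis using a by simp
qed

lemma Gm_nonneg: "0 \<le> Gm \<omega>"
proof -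
  have "\<bar>GV 0 \<omega>\<bar> * indicator (D 0) \<omega> \<le> Gm \<omega>"
    by (rule Max_ge) auto
  moreover have "0 \<le> \<bar>GV 0 \<omega>\<bar> * indicator (D 0) \<omega>" by simp
  ultimately show ?thesis by linarith
qed

lemma Nf_bnd: "\<omega> \<in> space M \<Longrightarrow> \<bar>Nf \<theta> t \<omega>\<bar> \<le> Gm \<omega>"
proof -
  assume \<omega>: "\<omega> \<in> space M"
  show ?thesis
  proof (cases "lhd (next_stop T \<theta> t \<omega>) (exit_time T X B \<omega>)")
    case True
    show ?thesis
    proof (cases "next_stop T \<theta> t \<omega>")
      case (enat s)
      have sT: "s \<le> T" using next_stop_enat[OF enat] by simp
      have "\<omega> \<in> D s" using True enat \<omega> unfolding Dset_def by (simp add: lhd_enat)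
      then show ?thesis using Gm_ge[OF sT] True enat unfolding stopped_payoff_def by simp
    next
      case infinity
      then show ?thesis using True Gm_nonneg unfolding stopped_payoff_def by simp
    qed
  next
    case False
    then show ?thesis using Gm_nonneg unfolding stopped_payoff_def by simp
  qed
qed

lemma GV_meas: "s \<le> T \<Longrightarrow> GV s \<in> borel_measurable (F s)"
proof -
  assume a: "s \<le> T"
  have [measurable]: "X s \<in> borel_measurable (F s)" "g s \<in> borel_measurable borel" using XF a g_meas by auto
  show ?thesis unfolding Gval_def by measurable
qed

lemma GV_measVA: "s \<le> T \<Longrightarrow> GV s \<in> borel_measurable (VA s r)"
proof -
  assume a: "s \<le> T"
  have [measurable]: "X s \<in> borel_measurable (VA s r)" "g s \<in> borel_measurable borel" using X_VA a g_meas by auto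
  show ?thesis unfolding Gval_def by measurable
qed

lemma GV_M: "s \<le> T \<Longrightarrow> GV s \<in> borel_measurable M"
  using GV_meas subF meas_sub by blast

lemma int_Gm: "integrable M Gm"
  using integr by simp

lemma Gm_M: "Gm \<in> borel_measurable M"
  using int_Gm by auto

definition pol :: "(nat \<Rightarrow> 'a \<Rightarrow> bool) \<Rightarrow> bool" where
  "pol \<theta> \<longleftrightarrow> (\<forall>s\<le>T. \<theta> s \<in> F s \<rightarrow>\<^sub>M count_space UNIV)"

lemma pol_M: "pol \<theta> \<Longrightarrow> s \<le> T \<Longrightarrow> \<theta> s \<in> M \<rightarrow>\<^sub>M count_space UNIV"
  unfolding pol_def using subF meas_sub by blast

lemma NQ_meas:
  assumes p: "pol \<theta>" and tT: "t \<le> T"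
  shows "Nf \<theta> t \<in> borel_measurable M \<and> Qf \<theta> t \<in> borel_measurable M"
  using tT
proof (induction t rule: inc_induct)
  case base
  have "Nf \<theta> T = (\<lambda>_. 0)" using Nf_T by auto
  moreover have "Qf \<theta> T \<in> borel_measurable M" unfolding Qf_T using D_M by auto
  ultimately show ?case by simp
next
  case (step n)
  have [measurable]: "\<theta> (Suc n) \<in> M \<rightarrow>\<^sub>M count_space UNIV" using pol_M[OF p] step by simp
  have [measurable]: "GV (Suc n) \<in> borel_measurable M" using GV_M step by simp
  have [measurable]: "D (Suc n) \<in> sets M" using D_M step by simp
  have [measurable]: "Nf \<theta> (Suc n) \<in> borel_measurable M" "Qf \<theta> (Suc n) \<in> borel_measurable M" using step by auto
  have "(\<lambda>\<omega>. indicator (D (Suc n)) \<omega> * (if \<theta> (Suc n) \<omega> then GV (Suc n) \<omega> else Nf \<theta> (Suc n) \<omega>)) \<in> borel_measurable M"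
    by measurable
  moreover have "(\<lambda>\<omega>. indicator (D (Suc n)) \<omega> * (if \<theta> (Suc n) \<omega> then 1 else Qf \<theta> (Suc n) \<omega>)) \<in> borel_measurable M"
    by measurable
  ultimately show ?case using Nf_Suc[of n] Qf_Suc[of n] step(2)
    by (auto cong: measurable_cong)
qed

lemma int_Nf: "pol \<theta> \<Longrightarrow> t \<le> T \<Longrightarrow> integrable M (Nf \<theta> t)"
  by (rule Bochner_Integration.integrable_bound[OF int_Gm])
     (auto intro!: AE_I2 simp: NQ_meas Nf_bnd intro: order.trans[OF Nf_bnd] abs_ge_self)

lemma int_Qf: "pol \<theta> \<Longrightarrow> t \<le> T \<Longrightarrow> integrable M (Qf \<theta> t)"
  by (rule int_bdd[where c=1]) (auto simp: NQ_meas indicator_def)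

lemma step_N:
  assumes p: "pol \<theta>" and tT: "t < T"
  shows "AE \<omega> in M. real_cond_exp M (F (Suc t)) (Nf \<theta> t) \<omega> =
     indicator (D (Suc t)) \<omega> * (if \<theta> (Suc t) \<omega> then GV (Suc t) \<omega> else real_cond_exp M (F (Suc t)) (Nf \<theta> (Suc t)) \<omega>)"
proof -
  have sT: "Suc t \<le> T" using tT by simp
  interpret Fi: sigma_finite_subalgebra M "F (Suc t)" by (rule sfF[OF sT])
  have [measurable]: "\<theta> (Suc t) \<in> M \<rightarrow>\<^sub>M count_space UNIV" using pol_M[OF p sT] .
  have [measurable]: "GV (Suc t) \<in> borel_measurable M" using GV_M sT by simp
  have [measurable]: "D (Suc t) \<in> sets M" using D_M sT by simp
  have [measurable]: "Nf \<theta> (Suc t) \<in> borel_measurable M" using NQ_meas[OF p sT] by auto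
  have iV: "integrable M (\<lambda>\<omega>. indicator (D (Suc t)) \<omega> * GV (Suc t) \<omega>)"
  proof (rule Bochner_Integration.integrable_bound[OF int_Gm])
    show "(\<lambda>\<omega>. indicator (D (Suc t)) \<omega> * GV (Suc t) \<omega>) \<in> borel_measurable M" by measurable
    have "\<And>x. norm (indicator (D (Suc t)) x * GV (Suc t) x) \<le> norm (Gm x)"
    proof -
      fix x show "norm (indicator (D (Suc t)) x * GV (Suc t) x) \<le> norm (Gm x)"
      proof (cases "x \<in> D (Suc t)")
        case True
        then show ?thesis using Gm_ge[OF sT True] by simp
      qed simp
    qed
    then show "AE x in M. norm (indicator (D (Suc t)) x * GV (Suc t) x) \<le> norm (Gm x)" by simp
  qed
  have "AE \<omega> in M. real_cond_exp M (F (Suc t)) (Nf \<theta> t) \<omega> =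
     real_cond_exp M (F (Suc t)) (\<lambda>\<omega>. indicator (D (Suc t)) \<omega> * (if \<theta> (Suc t) \<omega> then GV (Suc t) \<omega> else Nf \<theta> (Suc t) \<omega>)) \<omega>"
    by (rule Fi.real_cond_exp_cong) (auto intro!: AE_I2 simp: Nf_Suc[OF tT] NQ_meas[OF p] tT less_imp_le)
  moreover have "AE \<omega> in M. real_cond_exp M (F (Suc t)) (\<lambda>\<omega>. indicator (D (Suc t)) \<omega> * (if \<theta> (Suc t) \<omega> then GV (Suc t) \<omega> else Nf \<theta> (Suc t) \<omega>)) \<omega>
     = indicator (D (Suc t)) \<omega> * (if \<theta> (Suc t) \<omega> then GV (Suc t) \<omega> else real_cond_exp M (F (Suc t)) (Nf \<theta> (Suc t)) \<omega>)"
    by (rule Fi.cond_if[OF D_F[OF sT] _ GV_meas[OF sT] iV int_Nf[OF p sT]]) (use p sT in \<open>auto simp: pol_def\<close>)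
  ultimately show ?thesis by auto
qed

lemma step_Q:
  assumes p: "pol \<theta>" and tT: "t < T"
  shows "AE \<omega> in M. real_cond_exp M (F (Suc t)) (Qf \<theta> t) \<omega> =
     indicator (D (Suc t)) \<omega> * (if \<theta> (Suc t) \<omega> then 1 else real_cond_exp M (F (Suc t)) (Qf \<theta> (Suc t)) \<omega>)"
proof -
  have sT: "Suc t \<le> T" using tT by simp
  interpret Fi: sigma_finite_subalgebra M "F (Suc t)" by (rule sfF[OF sT])
  have [measurable]: "\<theta> (Suc t) \<in> M \<rightarrow>\<^sub>M count_space UNIV" using pol_M[OF p sT] .
  have [measurable]: "D (Suc t) \<in> sets M" using D_M sT by simp
  have [measurable]: "Qf \<theta> (Suc t) \<in> borel_measurable M" using NQ_meas[OF p sT] by auto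
  have iV: "integrable M (\<lambda>\<omega>. indicator (D (Suc t)) \<omega> * (1::real))"
    by (rule int_bdd[where c=1]) (auto simp: indicator_def)
  have "AE \<omega> in M. real_cond_exp M (F (Suc t)) (Qf \<theta> t) \<omega> =
     real_cond_exp M (F (Suc t)) (\<lambda>\<omega>. indicator (D (Suc t)) \<omega> * (if \<theta> (Suc t) \<omega> then 1 else Qf \<theta> (Suc t) \<omega>)) \<omega>"
    by (rule Fi.real_cond_exp_cong) (auto intro!: AE_I2 simp: Qf_Suc[OF tT] NQ_meas[OF p] tT less_imp_le)
  moreover have "AE \<omega> in M. real_cond_exp M (F (Suc t)) (\<lambda>\<omega>. indicator (D (Suc t)) \<omega> * (if \<theta> (Suc t) \<omega> then 1 else Qf \<theta> (Suc t) \<omega>)) \<omega>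
     = indicator (D (Suc t)) \<omega> * (if \<theta> (Suc t) \<omega> then 1 else real_cond_exp M (F (Suc t)) (Qf \<theta> (Suc t)) \<omega>)"
    by (rule Fi.cond_if[OF D_F[OF sT] _ _ iV int_Qf[OF p sT]]) (use p sT in \<open>auto simp: pol_def\<close>)
  ultimately show ?thesis by auto
qed

end

lemma (in sigma_finite_subalgebra) pos_transfer:
  assumes iW: "integrable M W" and iY: "integrable M Y" and W0: "AE \<omega> in M. 0 \<le> W \<omega>"
    and Y0: "AE \<omega> in M. 0 \<le> Y \<omega>" and WY: "AE \<omega> in M. W \<omega> > 0 \<longrightarrow> Y \<omega> > 0"
  shows "AE \<omega> in M. real_cond_exp M F W \<omega> > 0 \<longrightarrow> real_cond_exp M F Y \<omega> > 0"
proof -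
  have WM[measurable]: "W \<in> borel_measurable M" and YM[measurable]: "Y \<in> borel_measurable M" using iW iY by auto
  define A where "A = {\<omega>\<in>space M. real_cond_exp M F Y \<omega> \<le> 0}"
  have AF: "A \<in> sets F"
  proof -
    have "{\<omega>\<in>space F. real_cond_exp M F Y \<omega> \<le> 0} \<in> sets F" by measurable
    moreover have "space F = space M" using subalg unfolding subalgebra_def by simp
    ultimately show ?thesis unfolding A_def by simp
  qed
  have AM[measurable]: "A \<in> sets M" using AF subalg unfolding subalgebra_def by auto
  have indAF: "(indicator A :: 'a \<Rightarrow> real) \<in> borel_measurable F" using AF by simp
  have iAY: "integrable M (\<lambda>\<omega>. indicator A \<omega> * Y \<omega>)" using integrable_mult_indicator[OF AM iY] by simp
  have iAW: "integrable M (\<lambda>\<omega>. indicator A \<omega> * W \<omega>)" using integrable_mult_indicator[OF AM iW] by simp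
  have icY: "integrable M (real_cond_exp M F Y)" by (rule real_cond_exp_int(1)[OF iY])
  have icW: "integrable M (real_cond_exp M F W)" by (rule real_cond_exp_int(1)[OF iW])
  have iAcY: "integrable M (\<lambda>\<omega>. indicator A \<omega> * real_cond_exp M F Y \<omega>)"
    using integrable_mult_indicator[OF AM icY] by simp
  have iAcW: "integrable M (\<lambda>\<omega>. indicator A \<omega> * real_cond_exp M F W \<omega>)"
    using integrable_mult_indicator[OF AM icW] by simp
  have e1: "(\<integral>\<omega>. indicator A \<omega> * Y \<omega> \<partial>M) = (\<integral>\<omega>. indicator A \<omega> * real_cond_exp M F Y \<omega> \<partial>M)"
    by (rule real_cond_exp_intg(2)[symmetric, OF iAY indAF YM])
  have "(\<integral>\<omega>. indicator A \<omega> * real_cond_exp M F Y \<omega> \<partial>M) \<le> (\<integral>\<omega>. 0 \<partial>M)"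
    by (rule integral_mono_AE[OF iAcY]) (auto intro!: AE_I2 simp: A_def indicator_def)
  moreover have "0 \<le> (\<integral>\<omega>. indicator A \<omega> * Y \<omega> \<partial>M)"
    by (rule integral_nonneg_AE) (use Y0 in \<open>auto simp: indicator_def\<close>)
  ultimately have "(\<integral>\<omega>. indicator A \<omega> * Y \<omega> \<partial>M) = 0" using e1 by simp
  moreover have nnY: "AE \<omega> in M. 0 \<le> indicator A \<omega> * Y \<omega>" using Y0 by eventually_elim simp
  ultimately have "AE \<omega> in M. indicator A \<omega> * Y \<omega> = 0"
    using integral_nonneg_eq_0_iff_AE[OF iAY nnY] by simp
  then have AW: "AE \<omega> in M. indicator A \<omega> * W \<omega> = 0"
    using W0 WY by eventually_elim (auto simp: indicator_def split: if_splits)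
  have "(\<integral>\<omega>. indicator A \<omega> * real_cond_exp M F W \<omega> \<partial>M) = (\<integral>\<omega>. indicator A \<omega> * W \<omega> \<partial>M)"
    by (rule real_cond_exp_intg(2)[OF iAW indAF WM])
  also have "\<dots> = (\<integral>\<omega>. 0 \<partial>M)" by (rule integral_cong_AE) (use AW in auto)
  finally have z: "(\<integral>\<omega>. indicator A \<omega> * real_cond_exp M F W \<omega> \<partial>M) = 0" by simp
  have cW0: "AE \<omega> in M. 0 \<le> real_cond_exp M F W \<omega>" by (rule real_cond_exp_pos[OF W0 WM])
  have nnW: "AE \<omega> in M. 0 \<le> indicator A \<omega> * real_cond_exp M F W \<omega>" using cW0 by eventually_elim simp
  have "AE \<omega> in M. indicator A \<omega> * real_cond_exp M F W \<omega> = 0"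
    using integral_nonneg_eq_0_iff_AE[OF iAcW nnW] z by simp
  then show ?thesis using AE_space
  proof eventually_elim
    case (elim \<omega>)
    show ?case
    proof
      assume "real_cond_exp M F W \<omega> > 0"
      then have "\<omega> \<notin> A" using elim by (auto simp: indicator_def)
      then show "real_cond_exp M F Y \<omega> > 0" using elim(2) by (auto simp: A_def)
    qed
  qed
qed

lemma eff_lt_gen:
  fixes c :: "nat \<Rightarrow> real"
  shows "t < (if \<exists>s<T. c s = 0 then (LEAST s. s < T \<and> c s = 0) else T) \<longleftrightarrow> t < T \<and> (\<forall>s\<le>t. c s \<noteq> 0)"
proof (cases "\<exists>s<T. c s = 0")
  case True
  let ?P = "\<lambda>s. s < T \<and> c s = 0"
  have ex: "\<exists>s. ?P s" using True by auto
  have PL: "?P (Least ?P)" by (rule LeastI_ex[OF ex])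
  have "t < Least ?P \<longleftrightarrow> t < T \<and> (\<forall>s\<le>t. c s \<noteq> 0)"
  proof
    assume a: "t < Least ?P"
    have "t < T" using a PL by simp
    moreover have "\<forall>s\<le>t. c s \<noteq> 0"
    proof (intro allI impI)
      fix s assume "s \<le> t"
      then have "s < Least ?P" using a by simp
      then have "\<not> ?P s" by (rule not_less_Least)
      then show "c s \<noteq> 0" using \<open>s \<le> t\<close> \<open>t < T\<close> by simp
    qed
    ultimately show "t < T \<and> (\<forall>s\<le>t. c s \<noteq> 0)" by simp
  next
    assume a: "t < T \<and> (\<forall>s\<le>t. c s \<noteq> 0)"
    show "t < Least ?P"
    proof (rule ccontr)
      assume "\<not> t < Least ?P"
      then have "Least ?P \<le> t" by simp
      then show False using a PL by auto
    qed
  qed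
  then show ?thesis using True by simp
next
  case False
  then show ?thesis by auto
qed

context mk
begin

definition p :: "nat \<Rightarrow> 'a \<Rightarrow> real" where
  "p t = real_cond_exp M (H t) (indicator (D (Suc t)))"

lemma p_H: "p t \<in> borel_measurable (H t)"
  unfolding p_def by simp

lemma p_M: "p t \<in> borel_measurable M"
  unfolding p_def by simp

lemma p_F: "t < T \<Longrightarrow> AE \<omega> in M. real_cond_exp M (F t) (indicator (D (Suc t))) \<omega> = p t \<omega>"
proof -
  assume tT: "t < T"
  show ?thesis unfolding p_def
    by (rule Mkv[OF tT ind_D_Suc_VA int_ind[OF D_M]]) (use tT in auto)
qed

lemma p_nonneg: "t < T \<Longrightarrow> AE \<omega> in M. 0 \<le> p t \<omega>"
proof -
  assume tT: "t < T"
  interpret Hi: sigma_finite_subalgebra M "H t" by (rule sfH) (use tT in simp)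
  show ?thesis unfolding p_def
    by (rule Hi.real_cond_exp_ge_c[OF int_ind]) (use tT in \<open>auto intro: D_M\<close>)
qed

lemma p_offD: "t < T \<Longrightarrow> AE \<omega> in M. \<omega> \<notin> D t \<longrightarrow> p t \<omega> = 0"
proof -
  assume tT: "t < T"
  interpret Hi: sigma_finite_subalgebra M "H t" by (rule sfH) (use tT in simp)
  have XM'[measurable]: "X (Suc t) \<in> borel_measurable M" using XM tT by simp
  have [measurable]: "B \<in> sets borel" by (rule B_meas)
  have DH: "(indicator (D t) :: 'a \<Rightarrow> real) \<in> borel_measurable (H t)" using D_VA by simp
  have gM: "(\<lambda>\<omega>. indicator B (X (Suc t) \<omega>) :: real) \<in> borel_measurable M" by measurable
  have [measurable]: "D t \<in> sets M" using D_M tT by simp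
  have ig: "integrable M (\<lambda>\<omega>. indicator (D t) \<omega> * indicator B (X (Suc t) \<omega>) :: real)"
    by (rule int_bdd[where c=1]) (auto simp: indicator_def)
  have e: "(indicator (D (Suc t)) :: 'a \<Rightarrow> real) = (\<lambda>\<omega>. indicator (D t) \<omega> * indicator B (X (Suc t) \<omega>))"
    using ind_D_Suc tT by (auto simp: fun_eq_iff)
  have "AE \<omega> in M. p t \<omega> = indicator (D t) \<omega> * real_cond_exp M (H t) (\<lambda>\<omega>. indicator B (X (Suc t) \<omega>)) \<omega>"
    unfolding p_def e by (rule Hi.real_cond_exp_mult[OF DH gM ig])
  then show ?thesis by eventually_elim (auto simp: indicator_def)
qed

lemma p_onD: "t < T \<Longrightarrow> AE \<omega> in M. \<omega> \<in> D (Suc t) \<longrightarrow> p t \<omega> \<noteq> 0"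
proof -
  assume tT: "t < T"
  interpret Hi: sigma_finite_subalgebra M "H t" by (rule sfH) (use tT in simp)
  define A where "A = {\<omega>\<in>space M. p t \<omega> = 0}"
  have AH: "A \<in> sets (H t)"
  proof -
    have [measurable]: "p t \<in> borel_measurable (H t)" by (rule p_H)
    have "{\<omega>\<in>space (H t). p t \<omega> = 0} \<in> sets (H t)" by measurable
    then show ?thesis unfolding A_def by simp
  qed
  have AM[measurable]: "A \<in> sets M" using subVA_M[of t t] AH tT unfolding subalgebra_def by auto
  have DM[measurable]: "D (Suc t) \<in> sets M" using D_M tT by simp
  have indAH: "(indicator A :: 'a \<Rightarrow> real) \<in> borel_measurable (H t)" using AH by simp
  have iAD: "integrable M (\<lambda>\<omega>. indicator A \<omega> * indicator (D (Suc t)) \<omega> :: real)"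
    by (rule int_bdd[where c=1]) (auto simp: indicator_def)
  have "(\<integral>\<omega>. indicator A \<omega> * indicator (D (Suc t)) \<omega> \<partial>M) = (\<integral>\<omega>. indicator A \<omega> * p t \<omega> \<partial>M)"
    unfolding p_def by (rule Hi.real_cond_exp_intg(2)[symmetric, OF iAD indAH]) simp
  also have "\<dots> = (\<integral>\<omega>. 0 \<partial>M)"
    by (rule Bochner_Integration.integral_cong) (auto simp: A_def indicator_def)
  finally have "(\<integral>\<omega>. indicator A \<omega> * indicator (D (Suc t)) \<omega> \<partial>M) = (0::real)" by simp
  moreover have nnAD: "AE \<omega> in M. 0 \<le> indicator A \<omega> * (indicator (D (Suc t)) \<omega> :: real)" by simp
  ultimately have "AE \<omega> in M. indicator A \<omega> * indicator (D (Suc t)) \<omega> = (0::real)"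
    using integral_nonneg_eq_0_iff_AE[OF iAD nnAD] by simp
  then show ?thesis
  proof eventually_elim
    case (elim \<omega>)
    show ?case
    proof
      assume d: "\<omega> \<in> D (Suc t)"
      then have "\<omega> \<in> space M" using D_sub by auto
      then show "p t \<omega> \<noteq> 0" using elim d by (auto simp: A_def indicator_def split: if_splits)
    qed
  qed
qed

lemma cprob_D: "cprob M (F s) (D (Suc s)) = real_cond_exp M (F s) (indicator (D (Suc s)))"
  unfolding cprob_def using D_sub[of "Suc s"] by (simp add: Int_absorb2)

lemma TE: "AE \<omega> in M. \<forall>t\<le>T. (t < eff_horizon M F T X B \<omega> \<longleftrightarrow> t < T \<and> \<omega> \<in> D t \<and> p t \<omega> \<noteq> 0)"
proof -
  have a1: "AE \<omega> in M. \<forall>s. s < T \<longrightarrow> cprob M (F s) (D (Suc s)) \<omega> = p s \<omega>"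
    unfolding AE_all_countable cprob_D by (auto intro: p_F)
  have a2: "AE \<omega> in M. \<forall>s. s < T \<longrightarrow> \<omega> \<notin> D s \<longrightarrow> p s \<omega> = 0"
    unfolding AE_all_countable by (auto intro: p_offD)
  have a3: "AE \<omega> in M. \<forall>s. s < T \<longrightarrow> \<omega> \<in> D (Suc s) \<longrightarrow> p s \<omega> \<noteq> 0"
    unfolding AE_all_countable by (auto intro: p_onD)
  show ?thesis using a1 a2 a3
  proof eventually_elim
    case (elim \<omega>)
    show ?case
    proof (intro allI impI)
      fix t assume tT: "t \<le> T"
      have "t < eff_horizon M F T X B \<omega> \<longleftrightarrow> t < T \<and> (\<forall>s\<le>t. cprob M (F s) (D (Suc s)) \<omega> \<noteq> 0)"
        unfolding eff_horizon_def by (rule eff_lt_gen)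
      also have "\<dots> \<longleftrightarrow> t < T \<and> (\<forall>s\<le>t. p s \<omega> \<noteq> 0)"
        using elim(1) by auto
      also have "\<dots> \<longleftrightarrow> t < T \<and> \<omega> \<in> D t \<and> p t \<omega> \<noteq> 0"
      proof
        assume a: "t < T \<and> (\<forall>s\<le>t. p s \<omega> \<noteq> 0)"
        then show "t < T \<and> \<omega> \<in> D t \<and> p t \<omega> \<noteq> 0" using elim(2) by auto
      next
        assume a: "t < T \<and> \<omega> \<in> D t \<and> p t \<omega> \<noteq> 0"
        show "t < T \<and> (\<forall>s\<le>t. p s \<omega> \<noteq> 0)"
        proof (intro conjI allI impI)
          show "t < T" using a by simp
          fix s assume st: "s \<le> t"
          show "p s \<omega> \<noteq> 0"
          proof (cases "s = t")
            case True then show ?thesis using a by simp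
          next
            case False
            then have "Suc s \<le> t" using st by simp
            then have "\<omega> \<in> D (Suc s)" using D_anti[of "Suc s" t] a by auto
            then show ?thesis using elim(3) a st by auto
          qed
        qed
      qed
      finally show "t < eff_horizon M F T X B \<omega> \<longleftrightarrow> t < T \<and> \<omega> \<in> D t \<and> p t \<omega> \<noteq> 0" .
    qed
  qed
qed

end

context mk
begin

definition phi :: "nat \<Rightarrow> ('a \<Rightarrow> real) \<Rightarrow> ('a \<Rightarrow> real) \<Rightarrow> 'a \<Rightarrow> bool" where
  "phi t n q \<omega> \<longleftrightarrow> (t < T \<longrightarrow> \<omega> \<in> D t \<longrightarrow> p t \<omega> \<noteq> 0 \<longrightarrow> n \<omega> / q \<omega> \<le> GV t \<omega>)"

fun NQ :: "nat \<Rightarrow> ('a \<Rightarrow> real) \<times> ('a \<Rightarrow> real)" where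
  "NQ 0 = ((\<lambda>_. 0), indicator (D T))"
| "NQ (Suc k) = (let t = T - Suc k; c = phi (Suc t) (fst (NQ k)) (snd (NQ k)) in
     (real_cond_exp M (H t) (\<lambda>\<omega>. indicator (D (Suc t)) \<omega> * (if c \<omega> then GV (Suc t) \<omega> else fst (NQ k) \<omega>)),
      real_cond_exp M (H t) (\<lambda>\<omega>. indicator (D (Suc t)) \<omega> * (if c \<omega> then 1 else snd (NQ k) \<omega>))))"

definition nn :: "nat \<Rightarrow> 'a \<Rightarrow> real" where "nn t = fst (NQ (T - t))"
definition qq :: "nat \<Rightarrow> 'a \<Rightarrow> real" where "qq t = snd (NQ (T - t))"
definition th :: "nat \<Rightarrow> 'a \<Rightarrow> bool" where "th t = phi t (nn t) (qq t)"

lemma nn_T: "nn T = (\<lambda>_. 0)" and qq_T: "qq T = indicator (D T)"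
  unfolding nn_def qq_def by simp_all

lemma nq_Suc:
  assumes tT: "t < T"
  shows "nn t = real_cond_exp M (H t) (\<lambda>\<omega>. indicator (D (Suc t)) \<omega> * (if th (Suc t) \<omega> then GV (Suc t) \<omega> else nn (Suc t) \<omega>))"
    and "qq t = real_cond_exp M (H t) (\<lambda>\<omega>. indicator (D (Suc t)) \<omega> * (if th (Suc t) \<omega> then 1 else qq (Suc t) \<omega>))"
proof -
  have e: "T - t = Suc (T - Suc t)" using tT by simp
  have e2: "T - Suc (T - Suc t) = t" using tT by simp
  show "nn t = real_cond_exp M (H t) (\<lambda>\<omega>. indicator (D (Suc t)) \<omega> * (if th (Suc t) \<omega> then GV (Suc t) \<omega> else nn (Suc t) \<omega>))"
    unfolding nn_def qq_def th_def e by (simp add: Let_def e2)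
  show "qq t = real_cond_exp M (H t) (\<lambda>\<omega>. indicator (D (Suc t)) \<omega> * (if th (Suc t) \<omega> then 1 else qq (Suc t) \<omega>))"
    unfolding nn_def qq_def th_def e by (simp add: Let_def e2)
qed

lemma th_ge: "T \<le> t \<Longrightarrow> th t \<omega>"
  unfolding th_def phi_def by simp

lemma nq_H: "t \<le> T \<Longrightarrow> nn t \<in> borel_measurable (H t) \<and> qq t \<in> borel_measurable (H t)"
proof -
  assume tT: "t \<le> T"
  show ?thesis
  proof (cases "t = T")
    case True
    have "(indicator (D T) :: 'a \<Rightarrow> real) \<in> borel_measurable (H T)" using D_VA by simp
    then show ?thesis using True nn_T qq_T by simp
  next
    case False
    then have "t < T" using tT by simp
    then show ?thesis using nq_Suc by simp
  qed
qed

lemma th_H: "t \<le> T \<Longrightarrow> th t \<in> H t \<rightarrow>\<^sub>M count_space UNIV"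
proof -
  assume tT: "t \<le> T"
  have [measurable]: "nn t \<in> borel_measurable (H t)" "qq t \<in> borel_measurable (H t)" using nq_H[OF tT] by auto
  have [measurable]: "p t \<in> borel_measurable (H t)" by (rule p_H)
  have [measurable]: "GV t \<in> borel_measurable (H t)" by (rule GV_measVA[OF tT])
  have [measurable]: "D t \<in> sets (H t)" by (rule D_VA)
  show ?thesis unfolding th_def phi_def by measurable
qed

lemma th_M: "t \<le> T \<Longrightarrow> th t \<in> M \<rightarrow>\<^sub>M count_space UNIV"
  using th_H subVA_M meas_sub by blast

lemma pol_th: "pol th"
  unfolding pol_def using th_H subVA meas_sub by blast

lemma th_VA: "Suc t \<le> T \<Longrightarrow> th (Suc t) \<in> VA (Suc t) t \<rightarrow>\<^sub>M count_space UNIV"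
  using th_H subH_VA meas_sub by blast

lemma nq_VA: "Suc t \<le> T \<Longrightarrow> nn (Suc t) \<in> borel_measurable (VA (Suc t) t) \<and> qq (Suc t) \<in> borel_measurable (VA (Suc t) t)"
  using nq_H subH_VA meas_sub by blast

definition INV :: "nat \<Rightarrow> bool" where
  "INV t \<longleftrightarrow> (AE \<omega> in M. real_cond_exp M (F t) (Nf th t) \<omega> = nn t \<omega>) \<and>
             (AE \<omega> in M. real_cond_exp M (F t) (Qf th t) \<omega> = qq t \<omega>) \<and>
             (AE \<omega> in M. t < T \<longrightarrow> p t \<omega> \<noteq> 0 \<longrightarrow> qq t \<omega> > 0)"

lemma INV_T: "INV T"
proof -
  interpret Fi: sigma_finite_subalgebra M "F T" by (rule sfF) simp
  have "Nf th T = (\<lambda>_. 0)" using Nf_T by auto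
  then have 1: "AE \<omega> in M. real_cond_exp M (F T) (Nf th T) \<omega> = nn T \<omega>"
    unfolding nn_T using Fi.real_cond_exp_F_meas[of "\<lambda>_. 0"] by simp
  have 2: "AE \<omega> in M. real_cond_exp M (F T) (Qf th T) \<omega> = qq T \<omega>"
  proof -
    have "D T \<in> sets (F T)" by (rule D_F) simp
    then have m: "(indicator (D T) :: 'a \<Rightarrow> real) \<in> borel_measurable (F T)" by simp
    have i: "integrable M (indicator (D T) :: 'a \<Rightarrow> real)" by (rule int_ind[OF D_M]) simp
    show ?thesis unfolding Qf_T qq_T by (rule Fi.real_cond_exp_F_meas[OF i m])
  qed
  show ?thesis unfolding INV_def using 1 2 by simp
qed

lemma INV_step:
  assumes tT: "t < T" and IH: "INV (Suc t)"
  shows "INV t"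
proof -
  have tT': "t \<le> T" and sT: "Suc t \<le> T" using tT by auto
  interpret Fi: sigma_finite_subalgebra M "F t" by (rule sfF[OF tT'])
  interpret Fs: sigma_finite_subalgebra M "F (Suc t)" by (rule sfF[OF sT])
  have subS: "subalgebra M (F (Suc t))" by (rule subF[OF sT])
  have subSt: "subalgebra (F (Suc t)) (F t)" by (rule Fmono) (use sT in auto)
  have IHN: "AE \<omega> in M. real_cond_exp M (F (Suc t)) (Nf th (Suc t)) \<omega> = nn (Suc t) \<omega>"
   and IHQ: "AE \<omega> in M. real_cond_exp M (F (Suc t)) (Qf th (Suc t)) \<omega> = qq (Suc t) \<omega>"
   and IHP: "AE \<omega> in M. Suc t < T \<longrightarrow> p (Suc t) \<omega> \<noteq> 0 \<longrightarrow> qq (Suc t) \<omega> > 0"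
    using IH unfolding INV_def by auto
  have [measurable]: "th (Suc t) \<in> M \<rightarrow>\<^sub>M count_space UNIV" using th_M[OF sT] .
  have [measurable]: "GV (Suc t) \<in> borel_measurable M" using GV_M[OF sT] .
  have [measurable]: "D (Suc t) \<in> sets M" using D_M[OF sT] .
  have [measurable]: "nn (Suc t) \<in> borel_measurable M" "qq (Suc t) \<in> borel_measurable M"
    using nq_H[OF sT] subVA_M[OF sT order.refl] meas_sub by blast+
  have NM: "Nf th t \<in> borel_measurable M" "Qf th t \<in> borel_measurable M" using NQ_meas[OF pol_th tT'] by auto
  have iN: "integrable M (Nf th t)" by (rule int_Nf[OF pol_th tT'])
  have iQ: "integrable M (Qf th t)" by (rule int_Qf[OF pol_th tT'])
  define Yn where "Yn = (\<lambda>\<omega>. indicator (D (Suc t)) \<omega> * (if th (Suc t) \<omega> then GV (Suc t) \<omega> else nn (Suc t) \<omega>))"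
  define Yq where "Yq = (\<lambda>\<omega>. indicator (D (Suc t)) \<omega> * (if th (Suc t) \<omega> then 1 else qq (Suc t) \<omega>))"
  have YnM[measurable]: "Yn \<in> borel_measurable M" unfolding Yn_def by measurable
  have YqM[measurable]: "Yq \<in> borel_measurable M" unfolding Yq_def by measurable
  have YnK: "Yn \<in> borel_measurable (VA (Suc t) t)"
  proof -
    have [measurable]: "th (Suc t) \<in> VA (Suc t) t \<rightarrow>\<^sub>M count_space UNIV" by (rule th_VA[OF sT])
    have [measurable]: "GV (Suc t) \<in> borel_measurable (VA (Suc t) t)" by (rule GV_measVA[OF sT])
    have [measurable]: "(indicator (D (Suc t)) :: 'a \<Rightarrow> real) \<in> borel_measurable (VA (Suc t) t)" by (rule ind_D_Suc_VA[OF sT])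
    have [measurable]: "nn (Suc t) \<in> borel_measurable (VA (Suc t) t)" using nq_VA[OF sT] by auto
    show ?thesis unfolding Yn_def by measurable
  qed
  have YqK: "Yq \<in> borel_measurable (VA (Suc t) t)"
  proof -
    have [measurable]: "th (Suc t) \<in> VA (Suc t) t \<rightarrow>\<^sub>M count_space UNIV" by (rule th_VA[OF sT])
    have [measurable]: "(indicator (D (Suc t)) :: 'a \<Rightarrow> real) \<in> borel_measurable (VA (Suc t) t)" by (rule ind_D_Suc_VA[OF sT])
    have [measurable]: "qq (Suc t) \<in> borel_measurable (VA (Suc t) t)" using nq_VA[OF sT] by auto
    show ?thesis unfolding Yq_def by measurable
  qed
  have sN: "AE \<omega> in M. real_cond_exp M (F (Suc t)) (Nf th t) \<omega> = Yn \<omega>"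
    using step_N[OF pol_th tT] IHN unfolding Yn_def by eventually_elim auto
  have sQ: "AE \<omega> in M. real_cond_exp M (F (Suc t)) (Qf th t) \<omega> = Yq \<omega>"
    using step_Q[OF pol_th tT] IHQ unfolding Yq_def by eventually_elim auto
  have iYn: "integrable M Yn" using integrable_cong_AE_imp[OF Fs.real_cond_exp_int(1)[OF iN] YnM sN] .
  have iYq: "integrable M Yq" using integrable_cong_AE_imp[OF Fs.real_cond_exp_int(1)[OF iQ] YqM sQ] .
  have tower: "\<And>Z. integrable M Z \<Longrightarrow> AE \<omega> in M. real_cond_exp M (F t) (real_cond_exp M (F (Suc t)) Z) \<omega> = real_cond_exp M (F t) Z \<omega>"
    by (rule Fi.real_cond_exp_nested_subalg[OF subS subSt])
  have N1: "AE \<omega> in M. real_cond_exp M (F t) (real_cond_exp M (F (Suc t)) (Nf th t)) \<omega> = real_cond_exp M (F t) Yn \<omega>"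
    by (rule Fi.real_cond_exp_cong[OF sN]) auto
  have Q1: "AE \<omega> in M. real_cond_exp M (F t) (real_cond_exp M (F (Suc t)) (Qf th t)) \<omega> = real_cond_exp M (F t) Yq \<omega>"
    by (rule Fi.real_cond_exp_cong[OF sQ]) auto
  have N2: "AE \<omega> in M. real_cond_exp M (F t) Yn \<omega> = nn t \<omega>"
    unfolding nq_Suc(1)[OF tT] Yn_def[symmetric] by (rule Mkv[OF tT YnK iYn])
  have Q2: "AE \<omega> in M. real_cond_exp M (F t) Yq \<omega> = qq t \<omega>"
    unfolding nq_Suc(2)[OF tT] Yq_def[symmetric] by (rule Mkv[OF tT YqK iYq])
  have resN: "AE \<omega> in M. real_cond_exp M (F t) (Nf th t) \<omega> = nn t \<omega>"
    using tower[OF iN] N1 N2 by eventually_elim auto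
  have resQ: "AE \<omega> in M. real_cond_exp M (F t) (Qf th t) \<omega> = qq t \<omega>"
    using tower[OF iQ] Q1 Q2 by eventually_elim auto
  have qq0: "AE \<omega> in M. 0 \<le> qq (Suc t) \<omega>"
  proof -
    have "AE \<omega> in M. 0 \<le> real_cond_exp M (F (Suc t)) (Qf th (Suc t)) \<omega>"
      by (rule Fs.real_cond_exp_pos) (auto simp: NQ_meas[OF pol_th sT])
    then show ?thesis using IHQ by eventually_elim auto
  qed
  have Yq0: "AE \<omega> in M. 0 \<le> Yq \<omega>"
    using qq0 by eventually_elim (auto simp: Yq_def)
  have WY: "AE \<omega> in M. indicator (D (Suc t)) \<omega> > (0::real) \<longrightarrow> Yq \<omega> > 0"
    using IHP
  proof eventually_elim
    case (elim \<omega>)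
    show ?case
    proof
      assume "indicator (D (Suc t)) \<omega> > (0::real)"
      then have d: "\<omega> \<in> D (Suc t)" by (auto simp: indicator_def split: if_splits)
      show "Yq \<omega> > 0"
      proof (cases "th (Suc t) \<omega>")
        case True
        then show ?thesis using d by (simp add: Yq_def)
      next
        case False
        then have "Suc t < T" "p (Suc t) \<omega> \<noteq> 0" using d unfolding th_def phi_def by auto
        then have "qq (Suc t) \<omega> > 0" using elim by simp
        then show ?thesis using d False by (simp add: Yq_def)
      qed
    qed
  qed
  have iW: "integrable M (indicator (D (Suc t)) :: 'a \<Rightarrow> real)" by (rule int_ind) simp
  have PT: "AE \<omega> in M. real_cond_exp M (F t) (indicator (D (Suc t))) \<omega> > 0 \<longrightarrow> real_cond_exp M (F t) Yq \<omega> > 0"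
    by (rule Fi.pos_transfer[OF iW iYq _ Yq0 WY]) simp
  have resP: "AE \<omega> in M. t < T \<longrightarrow> p t \<omega> \<noteq> 0 \<longrightarrow> qq t \<omega> > 0"
    using PT p_F[OF tT] p_nonneg[OF tT] Q2 by eventually_elim auto
  show ?thesis unfolding INV_def using resN resQ resP by simp
qed

lemma INV_all: "t \<le> T \<Longrightarrow> INV t"
proof (induction t rule: inc_induct)
  case base
  then show ?case by (rule INV_T)
next
  case (step n)
  then show ?case using INV_step by simp
qed

end

context mk
begin

lemma cprob_SBE: "cprob M (F t) (SBE \<theta> t) = real_cond_exp M (F t) (Qf \<theta> t)"
proof -
  have "SBE \<theta> t \<inter> space M = SBE \<theta> t" unfolding stop_before_exit_def by auto
  then show ?thesis unfolding cprob_def by simp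
qed

lemma Jval_th: "t \<le> T \<Longrightarrow> AE \<omega> in M. Jval M F T X B \<delta> g th t \<omega> = nn t \<omega> / qq t \<omega>"
proof -
  assume tT: "t \<le> T"
  have "AE \<omega> in M. real_cond_exp M (F t) (Nf th t) \<omega> = nn t \<omega>"
       "AE \<omega> in M. real_cond_exp M (F t) (Qf th t) \<omega> = qq t \<omega>"
    using INV_all[OF tT] unfolding INV_def by auto
  then show ?thesis unfolding Jval_def cprob_SBE by eventually_elim simp
qed

lemma Jval_cong:
  assumes tT: "t \<le> T" and p': "pol \<theta>'" and ae: "\<forall>s. t < s \<longrightarrow> s \<le> T \<longrightarrow> (AE \<omega> in M. \<theta>' s \<omega> = th s \<omega>)"
  shows "AE \<omega> in M. Jval M F T X B \<delta> g \<theta>' t \<omega> = nn t \<omega> / qq t \<omega>"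
proof -
  interpret Fi: sigma_finite_subalgebra M "F t" by (rule sfF[OF tT])
  have ae2: "AE \<omega> in M. \<forall>s. t < s \<longrightarrow> s \<le> T \<longrightarrow> \<theta>' s \<omega> = th s \<omega>"
    unfolding AE_all_countable using ae by auto
  have ns: "AE \<omega> in M. next_stop T \<theta>' t \<omega> = next_stop T th t \<omega>"
    using ae2 by eventually_elim (rule next_stop_cong, auto)
  have eN: "AE \<omega> in M. Nf \<theta>' t \<omega> = Nf th t \<omega>"
    using ns by eventually_elim (simp add: stopped_payoff_def)
  have eQ: "AE \<omega> in M. Qf \<theta>' t \<omega> = Qf th t \<omega>"
    using ns by eventually_elim (simp add: stop_before_exit_def indicator_def)
  have m: "Nf \<theta>' t \<in> borel_measurable M" "Qf \<theta>' t \<in> borel_measurable M"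
          "Nf th t \<in> borel_measurable M" "Qf th t \<in> borel_measurable M"
    using NQ_meas[OF p' tT] NQ_meas[OF pol_th tT] by auto
  have cN: "AE \<omega> in M. real_cond_exp M (F t) (Nf \<theta>' t) \<omega> = real_cond_exp M (F t) (Nf th t) \<omega>"
    by (rule Fi.real_cond_exp_cong[OF eN m(1) m(3)])
  have cQ: "AE \<omega> in M. real_cond_exp M (F t) (Qf \<theta>' t) \<omega> = real_cond_exp M (F t) (Qf th t) \<omega>"
    by (rule Fi.real_cond_exp_cong[OF eQ m(2) m(4)])
  have "AE \<omega> in M. real_cond_exp M (F t) (Nf th t) \<omega> = nn t \<omega>"
       "AE \<omega> in M. real_cond_exp M (F t) (Qf th t) \<omega> = qq t \<omega>"
    using INV_all[OF tT] unfolding INV_def by auto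
  with cN cQ show ?thesis unfolding Jval_def cprob_SBE by eventually_elim simp
qed

lemma th_equilibrium_early: "equilibrium_early M F T X B \<delta> g th"
proof -
  have sp: "stopping_policy F T th" using pol_th unfolding pol_def stopping_policy_def .
  have adm_b: "\<forall>t\<le>T. AE \<omega> in M. t < eff_horizon M F T X B \<omega> \<longrightarrow> cprob M (F t) (SBE th t) \<omega> > 0"
  proof (intro allI impI)
    fix t assume tT: "t \<le> T"
    have "AE \<omega> in M. real_cond_exp M (F t) (Qf th t) \<omega> = qq t \<omega>"
         "AE \<omega> in M. t < T \<longrightarrow> p t \<omega> \<noteq> 0 \<longrightarrow> qq t \<omega> > 0"
      using INV_all[OF tT] unfolding INV_def by auto
    with TE show "AE \<omega> in M. t < eff_horizon M F T X B \<omega> \<longrightarrow> cprob M (F t) (SBE th t) \<omega> > 0"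
      unfolding cprob_SBE by eventually_elim (use tT in auto)
  qed
  have adm_c: "\<forall>t\<le>T. AE \<omega> in M. eff_horizon M F T X B \<omega> \<le> t \<longrightarrow> th t \<omega>"
  proof (intro allI impI)
    fix t assume tT: "t \<le> T"
    show "AE \<omega> in M. eff_horizon M F T X B \<omega> \<le> t \<longrightarrow> th t \<omega>"
      using TE by eventually_elim (use tT in \<open>auto simp: th_def phi_def not_less[symmetric]\<close>)
  qed
  have fix_pt: "\<forall>t\<le>T. AE \<omega> in M. Phi M F T X B \<delta> g th t \<omega> = th t \<omega>"
  proof (intro allI impI)
    fix t assume tT: "t \<le> T"
    show "AE \<omega> in M. Phi M F T X B \<delta> g th t \<omega> = th t \<omega>"
      using TE Jval_th[OF tT]
    proof eventually_elim
      case (elim \<omega>)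
      have iff: "t < eff_horizon M F T X B \<omega> \<longleftrightarrow> t < T \<and> \<omega> \<in> D t \<and> p t \<omega> \<noteq> 0"
        using elim(1) tT by blast
      show ?case
      proof (cases "t < eff_horizon M F T X B \<omega>")
        case True
        then have c: "t < T" "\<omega> \<in> D t" "p t \<omega> \<noteq> 0" using iff by auto
        have thv: "th t \<omega> = (Jval M F T X B \<delta> g th t \<omega> \<le> GV t \<omega>)"
          unfolding th_def phi_def elim(2) using c by simp
        have "Phi M F T X B \<delta> g th t \<omega> = (if GV t \<omega> > Jval M F T X B \<delta> g th t \<omega> then True
           else if GV t \<omega> = Jval M F T X B \<delta> g th t \<omega> then th t \<omega> else False)"
          unfolding Phi_def using True by simp
        then show ?thesis unfolding thv by auto
      next
        case False
        then have "\<not> (t < T \<and> \<omega> \<in> D t \<and> p t \<omega> \<noteq> 0)" using iff by simp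
        then have "th t \<omega>" unfolding th_def phi_def by auto
        moreover have "Phi M F T X B \<delta> g th t \<omega>" unfolding Phi_def using False by simp
        ultimately show ?thesis by simp
      qed
    qed
  qed
  have early: "\<forall>t\<le>T. AE \<omega> in M. (t < eff_horizon M F T X B \<omega> \<and>
                          Gval \<delta> g X t \<omega> = Jval M F T X B \<delta> g th t \<omega>) \<longrightarrow> th t \<omega>"
  proof (intro allI impI)
    fix t assume tT: "t \<le> T"
    show "AE \<omega> in M. (t < eff_horizon M F T X B \<omega> \<and> Gval \<delta> g X t \<omega> = Jval M F T X B \<delta> g th t \<omega>) \<longrightarrow> th t \<omega>"
      using TE Jval_th[OF tT]
    proof eventually_elim
      case (elim \<omega>)
      have iff: "t < eff_horizon M F T X B \<omega> \<longleftrightarrow> t < T \<and> \<omega> \<in> D t \<and> p t \<omega> \<noteq> 0"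
        using elim(1) tT by blast
      show ?case
      proof
        assume a: "t < eff_horizon M F T X B \<omega> \<and> Gval \<delta> g X t \<omega> = Jval M F T X B \<delta> g th t \<omega>"
        then have c: "t < T" "\<omega> \<in> D t" "p t \<omega> \<noteq> 0" using iff by auto
        have thv: "th t \<omega> = (Jval M F T X B \<delta> g th t \<omega> \<le> GV t \<omega>)"
          unfolding th_def phi_def elim(2) using c by simp
        show "th t \<omega>" unfolding thv using a by simp
      qed
    qed
  qed
  show ?thesis unfolding equilibrium_early_def equilibrium_def admissible_def
    using sp adm_b adm_c fix_pt early by blast
qed

lemma th_markovian: "markovian_policy M T X B th"
  unfolding markovian_policy_def using th_H by blast

lemma uniq_step:
  assumes eq: "equilibrium_early M F T X B \<delta> g \<theta>'" and tT: "t \<le> T"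
    and ae: "\<forall>s. t < s \<longrightarrow> s \<le> T \<longrightarrow> (AE \<omega> in M. \<theta>' s \<omega> = th s \<omega>)"
  shows "AE \<omega> in M. \<theta>' t \<omega> = th t \<omega>"
proof -
  have p': "pol \<theta>'" using eq unfolding equilibrium_early_def equilibrium_def admissible_def
      stopping_policy_def pol_def by blast
  have fx: "AE \<omega> in M. Phi M F T X B \<delta> g \<theta>' t \<omega> = \<theta>' t \<omega>"
    using eq tT unfolding equilibrium_early_def equilibrium_def by blast
  have er: "AE \<omega> in M. (t < eff_horizon M F T X B \<omega> \<and>
                          Gval \<delta> g X t \<omega> = Jval M F T X B \<delta> g \<theta>' t \<omega>) \<longrightarrow> \<theta>' t \<omega>"
    using eq tT unfolding equilibrium_early_def by blast
  have ac: "AE \<omega> in M. eff_horizon M F T X B \<omega> \<le> t \<longrightarrow> \<theta>' t \<omega>"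
    using eq tT unfolding equilibrium_early_def equilibrium_def admissible_def by blast
  show ?thesis using fx er ac TE Jval_cong[OF tT p' ae]
  proof eventually_elim
    case (elim \<omega>)
    have iff: "t < eff_horizon M F T X B \<omega> \<longleftrightarrow> t < T \<and> \<omega> \<in> D t \<and> p t \<omega> \<noteq> 0"
      using elim(4) tT by blast
    show ?case
    proof (cases "t < eff_horizon M F T X B \<omega>")
      case True
      then have c: "t < T" "\<omega> \<in> D t" "p t \<omega> \<noteq> 0" using iff by auto
      have thv: "th t \<omega> = (Jval M F T X B \<delta> g \<theta>' t \<omega> \<le> GV t \<omega>)"
        unfolding th_def phi_def elim(5) using c by simp
      have ph: "Phi M F T X B \<delta> g \<theta>' t \<omega> = (if GV t \<omega> > Jval M F T X B \<delta> g \<theta>' t \<omega> then True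
           else if GV t \<omega> = Jval M F T X B \<delta> g \<theta>' t \<omega> then \<theta>' t \<omega> else False)"
        unfolding Phi_def using True by simp
      have ea: "GV t \<omega> = Jval M F T X B \<delta> g \<theta>' t \<omega> \<Longrightarrow> \<theta>' t \<omega>" using elim(2) True by simp
      show ?thesis
      proof (cases "GV t \<omega> > Jval M F T X B \<delta> g \<theta>' t \<omega>")
        case True
        then show ?thesis using elim(1) ph thv by simp
      next
        case False
        show ?thesis
        proof (cases "GV t \<omega> = Jval M F T X B \<delta> g \<theta>' t \<omega>")
          case True
          then show ?thesis using ea thv by simp
        next
          case False2: False
          then have "GV t \<omega> < Jval M F T X B \<delta> g \<theta>' t \<omega>" using False by simp
          then show ?thesis using False False2 elim(1) ph thv by simp
        qed
      qed
    next
      case False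
      then have "\<not> (t < T \<and> \<omega> \<in> D t \<and> p t \<omega> \<noteq> 0)" using iff by simp
      then have "th t \<omega>" unfolding th_def phi_def by auto
      moreover have "\<theta>' t \<omega>" using False elim(3) by simp
      ultimately show ?thesis by simp
    qed
  qed
qed

lemma uniq:
  assumes eq: "equilibrium_early M F T X B \<delta> g \<theta>'"
  shows "\<forall>t\<le>T. AE \<omega> in M. \<theta>' t \<omega> = th t \<omega>"
proof -
  define Q where "Q t \<longleftrightarrow> (\<forall>s. t \<le> s \<longrightarrow> s \<le> T \<longrightarrow> (AE \<omega> in M. \<theta>' s \<omega> = th s \<omega>))" for t
  have "\<And>t. t \<le> T \<Longrightarrow> Q t"
  proof -
    fix t assume "t \<le> T"
    then show "Q t"
    proof (induction t rule: inc_induct)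
      case base
      have "\<forall>s. T < s \<longrightarrow> s \<le> T \<longrightarrow> (AE \<omega> in M. \<theta>' s \<omega> = th s \<omega>)" by simp
      then have "AE \<omega> in M. \<theta>' T \<omega> = th T \<omega>" by (rule uniq_step[OF eq order.refl])
      then show ?case unfolding Q_def by (metis antisym)
    next
      case (step n)
      have h: "\<forall>s. n < s \<longrightarrow> s \<le> T \<longrightarrow> (AE \<omega> in M. \<theta>' s \<omega> = th s \<omega>)"
      proof (intro allI impI)
        fix s assume "n < s" "s \<le> T"
        then have "Suc n \<le> s" by simp
        then show "AE \<omega> in M. \<theta>' s \<omega> = th s \<omega>" using step.IH \<open>s \<le> T\<close> unfolding Q_def by blast
      qed
      have hn: "AE \<omega> in M. \<theta>' n \<omega> = th n \<omega>"
        by (rule uniq_step[OF eq _ h]) (use step.hyps in simp)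
      show ?case unfolding Q_def
      proof (intro allI impI)
        fix s assume ns: "n \<le> s" "s \<le> T"
        show "AE \<omega> in M. \<theta>' s \<omega> = th s \<omega>"
        proof (cases "s = n")
          case True
          then show ?thesis using hn by simp
        next
          case False
          then have "n < s" using ns by simp
          then show ?thesis using h ns by blast
        qed
      qed
    qed
  qed
  then show ?thesis unfolding Q_def by blast
qed

lemma main: "\<exists>\<theta>. equilibrium_early M F T X B \<delta> g \<theta> \<and> markovian_policy M T X B \<theta> \<and>
           (\<forall>\<theta>'. equilibrium_early M F T X B \<delta> g \<theta>' \<longrightarrow>
                  (\<forall>t\<le>T. AE \<omega> in M. \<theta>' t \<omega> = \<theta> t \<omega>))"
  using th_equilibrium_early th_markovian uniq by blast

end

theorem corollary3p3:
  fixes M :: "'a measure" and F :: "nat \<Rightarrow> 'a measure" and T :: nat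
    and X :: "nat \<Rightarrow> 'a \<Rightarrow> 'x::{metric_space, second_countable_topology}"
    and x0 :: 'x and B :: "'x set" and \<delta> :: real and g :: "nat \<Rightarrow> 'x \<Rightarrow> real"
  assumes prob: "prob_space M"
    and filt_sub: "\<forall>t\<le>T. subalgebra M (F t)"
    and filt_mono: "\<forall>s t. s \<le> t \<longrightarrow> t \<le> T \<longrightarrow> sets (F s) \<subseteq> sets (F t)"
    and F0_trivial: "sets (F 0) = {{}, space M}"
    and markov: "markov_chain M F T X"
    and X0: "\<forall>\<omega>\<in>space M. X 0 \<omega> = x0"
    and B_meas: "B \<in> sets borel" and x0B: "x0 \<in> B"
    and g_meas: "\<forall>t\<le>T. g t \<in> borel_measurable borel"
    and delta: "0 < \<delta>" "\<delta> \<le> 1"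
    and integr: "integrable M (\<lambda>\<omega>. Max ((\<lambda>t. \<bar>Gval \<delta> g X t \<omega>\<bar> * indicator (Dset M T X B t) \<omega>) ` {0..T}))"
  shows "\<exists>\<theta>. equilibrium_early M F T X B \<delta> g \<theta> \<and> markovian_policy M T X B \<theta> \<and>
           (\<forall>\<theta>'. equilibrium_early M F T X B \<delta> g \<theta>' \<longrightarrow>
                  (\<forall>t\<le>T. AE \<omega> in M. \<theta>' t \<omega> = \<theta> t \<omega>))"
  proof -
  interpret mk M F T X x0 B \<delta> g
    by (rule mk.intro; fact)
  show ?thesis by (rule main)
qed

end
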